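(* Assume the standing setup. Let $j_1,\dots,j_{d+1}\in[k]$. If $\alpha_{j_1},\dots,\alpha_{j_{d+1}}$ are linearly independent in $V_1$, then $\beta_{j_1},\dots,\beta_{j_{d+1}}$ are linearly independent in $V_2$.
   Context: Standing setup: $\mathbb{F}$ is a field of characteristic $0$; $W$ is a group with finite generating set $S=\{s_1,\dots,s_k\}$. A linear map on a finite-dimensional space is a (generalized) reflection if it is diagonalizable and $s-\operatorname{Id}$ has rank $1$; a reflection vector is a nonzero vector in $\operatorname{Im}(s-\operatorname{Id})$. $(V_1,\rho_1)$, $(V_2,\rho_2)$ are irreducible reflection representations of $(W,S)$ (each $s_i$ acts by a reflection), both of dimension $n$. For each $i\in[k]$, $\alpha_i\in V_1$ is a chosen reflection vector of $s_i$ with $s_i\alpha_i=\lambda_i\alpha_i$ and $\beta_i\in V_2$ a chosen reflection vector of $s_i$ with $s_i\beta_i=\mu_i\beta_i$. $d$ is an integer with $1\le d\le n-1$, and $\psi:\bigwedge^dV_1\to\bigwedge^dV_2$ is an isomorphism of $W$-modules ($W$ acting diagonally). *)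

theory Defs
  imports "Jordan_Normal_Form.Matrix" "Jordan_Normal_Form.Determinant"
          "Jordan_Normal_Form.DL_Submatrix" "HOL-Algebra.Generated_Groups"
begin

definition diagonalizable :: "nat \<Rightarrow> 'a::field mat \<Rightarrow> bool" where
  "diagonalizable n A \<longleftrightarrow> A \<in> carrier_mat n n \<and>
     (\<exists>D. D \<in> carrier_mat n n \<and> diagonal_mat D \<and> similar_mat A D)"

definition refl_image :: "nat \<Rightarrow> 'a::field mat \<Rightarrow> 'a vec set" where
  "refl_image n A = {(A - 1\<^sub>m n) *\<^sub>v v | v. v \<in> carrier_vec n}"

definition is_reflection :: "nat \<Rightarrow> 'a::field mat \<Rightarrow> bool" where
  "is_reflection n A \<longleftrightarrow> diagonalizable n A \<and>
     (\<exists>u \<in> carrier_vec n. u \<noteq> 0\<^sub>v n \<and> refl_image n A = {c \<cdot>\<^sub>v u | c. True})"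

definition is_reflection_vector :: "nat \<Rightarrow> 'a::field mat \<Rightarrow> 'a vec \<Rightarrow> bool" where
  "is_reflection_vector n A v \<longleftrightarrow> v \<noteq> 0\<^sub>v n \<and> v \<in> refl_image n A"

definition is_rep :: "('g, 'b) monoid_scheme \<Rightarrow> nat \<Rightarrow> ('g \<Rightarrow> 'a::field mat) \<Rightarrow> bool" where
  "is_rep W n \<rho> \<longleftrightarrow> (\<forall>g \<in> carrier W. \<rho> g \<in> carrier_mat n n) \<and>
     \<rho> \<one>\<^bsub>W\<^esub> = 1\<^sub>m n \<and>
     (\<forall>g \<in> carrier W. \<forall>h \<in> carrier W. \<rho> (g \<otimes>\<^bsub>W\<^esub> h) = \<rho> g * \<rho> h)"

definition is_subspace :: "nat \<Rightarrow> 'a::field vec set \<Rightarrow> bool" where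
  "is_subspace n U \<longleftrightarrow> U \<subseteq> carrier_vec n \<and> 0\<^sub>v n \<in> U \<and>
     (\<forall>u \<in> U. \<forall>v \<in> U. u + v \<in> U) \<and> (\<forall>c. \<forall>u \<in> U. c \<cdot>\<^sub>v u \<in> U)"

definition irreducible_rep :: "('g, 'b) monoid_scheme \<Rightarrow> nat \<Rightarrow> ('g \<Rightarrow> 'a::field mat) \<Rightarrow> bool" where
  "irreducible_rep W n \<rho> \<longleftrightarrow> is_rep W n \<rho> \<and> n \<noteq> 0 \<and>
     (\<forall>U. is_subspace n U \<and> (\<forall>g \<in> carrier W. \<forall>u \<in> U. \<rho> g *\<^sub>v u \<in> U)
        \<longrightarrow> U = {0\<^sub>v n} \<or> U = carrier_vec n)"

definition reflection_rep ::
  "('g, 'b) monoid_scheme \<Rightarrow> nat \<Rightarrow> (nat \<Rightarrow> 'g) \<Rightarrow> nat \<Rightarrow> ('g \<Rightarrow> 'a::field mat) \<Rightarrow> bool" where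
  "reflection_rep W k s n \<rho> \<longleftrightarrow> is_rep W n \<rho> \<and> (\<forall>i < k. is_reflection n (\<rho> (s i)))"

text \<open>Linear independence of the family v 0, ..., v (m-1) in F^n (repetitions allowed,
  hence stated for families, not sets).\<close>
definition lin_indep_family :: "nat \<Rightarrow> nat \<Rightarrow> (nat \<Rightarrow> 'a::field vec) \<Rightarrow> bool" where
  "lin_indep_family n m v \<longleftrightarrow> (\<forall>i < m. v i \<in> carrier_vec n) \<and>
     (\<forall>c :: nat \<Rightarrow> 'a.
        foldr (\<lambda>i acc. c i \<cdot>\<^sub>v v i + acc) [0..<m] (0\<^sub>v n) = 0\<^sub>v n \<longrightarrow> (\<forall>i < m. c i = 0))"

text \<open>We model the d-th exterior power of F^n concretely by its standard basis
  e_I = e_{i_1} \<and> ... \<and> e_{i_d} (i_1 < ... < i_d), indexed by the d-subsets I of {0..<n}.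
  A matrix A acts on it by the d-th compound matrix: A e_J = sum_I det(A[I,J]) e_I,
  where A[I,J] is the submatrix with rows I and columns J (in increasing order).\<close>
definition dsubsets :: "nat \<Rightarrow> nat \<Rightarrow> nat set set" where
  "dsubsets n d = {I. I \<subseteq> {..<n} \<and> card I = d}"

definition compound :: "'a::comm_ring_1 mat \<Rightarrow> nat set \<Rightarrow> nat set \<Rightarrow> 'a" where
  "compound A I J = det (submatrix A I J)"

text \<open>A linear map between d-th exterior powers of F^n, given by its matrix
  P I J (I, J d-subsets) w.r.t. the standard bases, is an isomorphism of W-modules
  (W acting diagonally, i.e. by compound matrices) from the rep rho1 to the rep rho2.\<close>
definition ext_pow_iso ::
  "('g, 'b) monoid_scheme \<Rightarrow> nat \<Rightarrow> nat \<Rightarrow> ('g \<Rightarrow> 'a::field mat) \<Rightarrow> ('g \<Rightarrow> 'a mat)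
     \<Rightarrow> (nat set \<Rightarrow> nat set \<Rightarrow> 'a) \<Rightarrow> bool" where
  "ext_pow_iso W n d \<rho>1 \<rho>2 P \<longleftrightarrow>
     (\<exists>Q :: nat set \<Rightarrow> nat set \<Rightarrow> 'a.
        (\<forall>I \<in> dsubsets n d. \<forall>J \<in> dsubsets n d.
           (\<Sum>K \<in> dsubsets n d. P I K * Q K J) = (if I = J then 1 else 0) \<and>
           (\<Sum>K \<in> dsubsets n d. Q I K * P K J) = (if I = J then 1 else 0))) \<and>
     (\<forall>g \<in> carrier W. \<forall>I \<in> dsubsets n d. \<forall>J \<in> dsubsets n d.
        (\<Sum>K \<in> dsubsets n d. P I K * compound (\<rho>1 g) K J) =
        (\<Sum>K \<in> dsubsets n d. compound (\<rho>2 g) I K * P K J))"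

end

theory Submission
  imports Defs "Jordan_Normal_Form.Gauss_Jordan_Elimination"
begin

lemma pick_image:
  assumes "finite K" shows "pick K ` {..<card K} = K"
proof
  show "pick K ` {..<card K} \<subseteq> K" using pick_in_set_le by auto
  show "K \<subseteq> pick K ` {..<card K}"
  proof
    fix x assume x: "x \<in> K"
    have "card {a\<in>K. a < x} < card K"
      by (rule psubset_card_mono[OF assms]) (use x in auto)
    then show "x \<in> pick K ` {..<card K}"
      by (intro image_eqI[where x="card {a\<in>K. a < x}"]) (simp_all add: pick_card_in_set[OF x])
  qed
qed

lemma pick_inj: "inj_on (pick K) {..<card K}"
proof (rule inj_onI)
  fix x y assume xy: "x \<in> {..<card K}" "y \<in> {..<card K}" "pick K x = pick K y"
  show "x = y"
  proof (rule ccontr)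
    assume "x \<noteq> y"
    hence "x < y \<or> y < x" by arith
    thus False using pick_mono_le[of y K x] pick_mono_le[of x K y] xy by auto
  qed
qed

lemma dsubsets_finite: "finite (dsubsets n d)"
proof -
  have "dsubsets n d \<subseteq> Pow {..<n}" unfolding dsubsets_def by auto
  thus ?thesis by (rule finite_subset) auto
qed

lemma dsubsets_D: assumes "K \<in> dsubsets n d"
  shows "K \<subseteq> {..<n}" "card K = d" "finite K" "{j. j < n \<and> j \<in> K} = K"
  using assms unfolding dsubsets_def by (auto intro: finite_subset)

lemma cauchy_binet:
  fixes X Y :: "'a::comm_ring_1 mat"
  assumes X: "X \<in> carrier_mat d n" and Y: "Y \<in> carrier_mat n d"
  shows "det (X * Y) = (\<Sum>K\<in>dsubsets n d. det (submatrix X UNIV K) * det (submatrix Y K UNIV))"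
proof -
  define F where "F = {f. (\<forall>i\<in>{0..<d}. f i \<in> {0..<n}) \<and> (\<forall>i. i \<notin> {0..<d} \<longrightarrow> f i = i)}"
  define h where "h f = (\<Prod>i=0..<d. X $$ (i, f i)) * det (mat\<^sub>r d d (\<lambda>i. row Y (f i)))" for f
  define Fi where "Fi = {f\<in>F. inj_on f {0..<d}}"
  define D where "D = dsubsets n d"
  define PP where "PP = {p. p permutes {0..<d}}"
  define comb where "comb = (\<lambda>(K::nat set, p::nat\<Rightarrow>nat). (\<lambda>i. if i < d then pick K (p i) else i))"
  define dec where "dec = (\<lambda>f::nat\<Rightarrow>nat. (f ` {0..<d}, (\<lambda>i. if i < d then card {a \<in> f ` {0..<d}. a < f i} else i)))"
  have finF: "finite F" unfolding F_def by (rule finite_bounded_functions) auto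
  have rowY: "\<And>k. row Y k \<in> carrier_vec d" using Y by auto
  have 1: "det (X*Y) = (\<Sum>f\<in>F. det (mat\<^sub>r d d (\<lambda>i. X $$ (i, f i) \<cdot>\<^sub>v row Y (f i))))"
    unfolding mat_mul_finsum_alt[OF X Y] F_def
    by (rule det_linear_rows_sum) (use rowY in auto)
  also have "\<dots> = sum h F"
  proof (rule sum.cong[OF refl])
    fix f assume "f \<in> F"
    show "det (mat\<^sub>r d d (\<lambda>i. X $$ (i, f i) \<cdot>\<^sub>v row Y (f i))) = h f"
      unfolding h_def using det_rows_mul[of "\<lambda>i. row Y (f i)" d "\<lambda>i. X$$(i, f i)"] rowY by auto
  qed
  also have "\<dots> = sum h Fi"
  proof (rule sum.mono_neutral_right[OF finF])
    show "Fi \<subseteq> F" unfolding Fi_def by auto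
    show "\<forall>f\<in>F - Fi. h f = 0"
    proof
      fix f assume f: "f \<in> F - Fi"
      then obtain i j where ij: "i < d" "j < d" "i \<noteq> j" "f i = f j"
        unfolding Fi_def inj_on_def by auto
      have "det (mat\<^sub>r d d (\<lambda>i. row Y (f i))) = 0"
        by (rule det_identical_rows[OF mat_row_carrierI ij(3) ij(1) ij(2)])
           (use ij Y in auto)
      thus "h f = 0" unfolding h_def by simp
    qed
  qed
  also have "\<dots> = (\<Sum>(K,p)\<in>Sigma D (\<lambda>_. PP). h (comb (K,p)))"
  proof (rule sum.reindex_bij_witness[symmetric, where i = dec and j = comb])
    fix a assume a: "a \<in> Sigma D (\<lambda>_. PP)"
    then obtain K p where a': "a = (K,p)" "K \<in> D" "p permutes {0..<d}" unfolding PP_def by auto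
    note KD = dsubsets_D[OF a'(2)[unfolded D_def]]
    have pd: "\<And>i. i < d \<Longrightarrow> p i < d" using a'(3) permutes_in_image by fastforce
    have pid: "\<And>i. \<not> i < d \<Longrightarrow> p i = i" using a'(3) unfolding permutes_def by auto
    have img: "comb (K,p) ` {0..<d} = K"
    proof -
      have "comb (K,p) ` {0..<d} = pick K ` (p ` {0..<d})" unfolding comb_def by auto
      also have "p ` {0..<d} = {..<card K}" using permutes_image[OF a'(3)] KD by auto
      finally show ?thesis using pick_image[OF KD(3)] by simp
    qed
    show "comb a \<in> Fi"
    proof -
      have "inj_on (comb (K,p)) {0..<d}"
      proof (rule inj_onI)
        fix x y assume xy: "x \<in> {0..<d}" "y \<in> {0..<d}" "comb (K, p) x = comb (K, p) y"
        hence "pick K (p x) = pick K (p y)" unfolding comb_def by auto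
        hence "p x = p y" using pick_inj[of K] pd xy KD by (auto simp: inj_on_def)
        thus "x = y" using permutes_inj[OF a'(3)] by (auto simp: inj_def)
      qed
      moreover have "\<And>i. i < d \<Longrightarrow> pick K (p i) < n"
        using pick_in_set_le[of _ K] pd KD by auto
      ultimately show ?thesis unfolding Fi_def F_def a'(1) comb_def by auto
    qed
    show "dec (comb a) = a"
    proof -
      have "(\<lambda>i. if i < d then card {b \<in> K. b < comb (K, p) i} else i) = p"
      proof
        fix i show "(if i < d then card {b \<in> K. b < comb (K, p) i} else i) = p i"
          using card_pick_le[of "p i" K] pd[of i] pid[of i] KD unfolding comb_def by auto
      qed
      thus ?thesis unfolding dec_def a'(1) img by simp
    qed
  next
    fix f assume f: "f \<in> Fi"
    define K where "K = f ` {0..<d}"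
    define p where "p = (\<lambda>i. if i < d then card {a \<in> K. a < f i} else i)"
    have dec: "dec f = (K, p)" unfolding dec_def K_def p_def by simp
    have injf: "inj_on f {0..<d}" and fF: "f \<in> F" using f unfolding Fi_def by auto
    have cardK: "card K = d" unfolding K_def using card_image[OF injf] by simp
    have finK: "finite K" unfolding K_def by simp
    have Kn: "K \<subseteq> {..<n}" using fF unfolding K_def F_def by auto
    have fiK: "\<And>i. i < d \<Longrightarrow> f i \<in> K" unfolding K_def by auto
    have pd: "\<And>i. i < d \<Longrightarrow> p i < d"
    proof -
      fix i assume i: "i < d"
      have "card {a \<in> K. a < f i} < card K"
        by (rule psubset_card_mono[OF finK]) (use fiK[OF i] in auto)
      thus "p i < d" using i cardK unfolding p_def by simp
    qed
    have pick_p: "\<And>i. i < d \<Longrightarrow> pick K (p i) = f i"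
      unfolding p_def using pick_card_in_set fiK by auto
    have pperm: "p permutes {0..<d}"
    proof (rule inj_on_nat_permutes)
      show "inj_on p {0..<d}"
      proof (rule inj_onI)
        fix x y assume "x \<in> {0..<d}" "y \<in> {0..<d}" "p x = p y"
        hence "f x = f y" using pick_p[of x] pick_p[of y] \<open>x \<in> {0..<d}\<close> \<open>y \<in> {0..<d}\<close> by simp
        thus "x = y" using injf \<open>x \<in> {0..<d}\<close> \<open>y \<in> {0..<d}\<close> by (auto simp: inj_on_def)
      qed
      show "p \<in> {0..<d} \<rightarrow> {0..<d}" using pd by auto
      show "\<And>i. i \<notin> {0..<d} \<Longrightarrow> p i = i" unfolding p_def by auto
    qed auto
    show "dec f \<in> Sigma D (\<lambda>_. PP)" unfolding dec D_def PP_def dsubsets_def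
      using pperm cardK Kn by auto
    show "comb (dec f) = f"
    proof
      fix i show "comb (dec f) i = f i"
        unfolding dec comb_def using pick_p fF unfolding F_def by auto
    qed
  next
    fix a assume "a \<in> Sigma D (\<lambda>_. PP)"
    thus "h (comb a) = (case a of (K, p) \<Rightarrow> h (comb (K, p)))" by auto
  qed
  also have "\<dots> = (\<Sum>K\<in>D. \<Sum>p\<in>PP. h (comb (K,p)))"
  proof -
    have fD: "finite D" unfolding D_def by (rule dsubsets_finite)
    have fP: "finite PP" unfolding PP_def by (rule finite_permutations) simp
    show ?thesis by (rule sum.Sigma[OF fD, symmetric]) (use fP in blast)
  qed
  also have "\<dots> = (\<Sum>K\<in>D. det (submatrix X UNIV K) * det (submatrix Y K UNIV))"
  proof (rule sum.cong[OF refl])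
    fix K assume K: "K \<in> D"
    note KD = dsubsets_D[OF K[unfolded D_def]]
    define YK where "YK = submatrix Y K UNIV"
    define XK where "XK = submatrix X UNIV K"
    have YK: "YK \<in> carrier_mat d d" unfolding YK_def using Y KD
      by (auto simp: dim_submatrix)
    have XK: "XK \<in> carrier_mat d d" unfolding XK_def using X KD
      by (auto simp: dim_submatrix)
    have YKi: "\<And>a j. a < d \<Longrightarrow> j < d \<Longrightarrow> YK $$ (a,j) = Y $$ (pick K a, j)"
      unfolding YK_def using Y KD by (subst submatrix_index) (auto simp: pick_UNIV)
    have XKi: "\<And>a j. a < d \<Longrightarrow> j < d \<Longrightarrow> XK $$ (a,j) = X $$ (a, pick K j)"
      unfolding XK_def using X KD by (subst submatrix_index) (auto simp: pick_UNIV)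
    have "(\<Sum>p\<in>PP. h (comb (K,p))) = (\<Sum>p\<in>PP. (\<Prod>i=0..<d. XK $$ (i, p i)) * (signof p * det YK))"
    proof (rule sum.cong[OF refl])
      fix p assume p: "p \<in> PP"
      hence pp: "p permutes {0..<d}" unfolding PP_def by auto
      have pd: "\<And>i. i < d \<Longrightarrow> p i < d" using pp permutes_in_image by fastforce
      have m: "mat\<^sub>r d d (\<lambda>i. row Y (comb (K,p) i)) = mat d d (\<lambda>(i,j). YK $$ (p i, j))"
        by (rule eq_matI) (use pd YKi Y in \<open>auto simp: comb_def row_def\<close>)
      have pr: "(\<Prod>i=0..<d. X $$ (i, comb (K,p) i)) = (\<Prod>i=0..<d. XK $$ (i, p i))"
        by (rule prod.cong[OF refl]) (use pd XKi in \<open>auto simp: comb_def\<close>)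
      show "h (comb (K,p)) = (\<Prod>i=0..<d. XK $$ (i, p i)) * (signof p * det YK)"
        unfolding h_def m pr det_permute_rows[OF YK pp] ..
    qed
    also have "\<dots> = (\<Sum>p\<in>PP. signof p * (\<Prod>i=0..<d. XK $$ (i, p i))) * det YK"
      by (simp add: sum_distrib_right sum_distrib_left ac_simps)
    also have "\<dots> = det XK * det YK" unfolding det_def'[OF XK] PP_def by simp
    finally show "(\<Sum>p\<in>PP. h (comb (K,p))) = det (submatrix X UNIV K) * det (submatrix Y K UNIV)"
      unfolding XK_def YK_def .
  qed
  finally show ?thesis unfolding D_def .
qed

lemma submatrix_mult:
  fixes A B :: "'a::comm_ring_1 mat"
  assumes A: "A \<in> carrier_mat n n" and B: "B \<in> carrier_mat n n"
    and I: "I \<in> dsubsets n d" and J: "J \<in> dsubsets n d"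
  shows "submatrix (A * B) I J = submatrix A I UNIV * submatrix B UNIV J"
proof -
  note ID = dsubsets_D[OF I] and JD = dsubsets_D[OF J]
  have cU: "{j. j < n \<and> j \<in> (UNIV::nat set)} = {..<n}" by auto
  have dX: "submatrix A I UNIV \<in> carrier_mat d n" using A ID cU by (auto simp: dim_submatrix)
  have dY: "submatrix B UNIV J \<in> carrier_mat n d" using B JD cU by (auto simp: dim_submatrix)
  show ?thesis
  proof (rule eq_matI)
    show "dim_row (submatrix (A * B) I J) = dim_row (submatrix A I UNIV * submatrix B UNIV J)"
      using A B dX ID by (auto simp: dim_submatrix)
    show "dim_col (submatrix (A * B) I J) = dim_col (submatrix A I UNIV * submatrix B UNIV J)"
      using A B dY JD by (auto simp: dim_submatrix)
    fix i j assume i: "i < dim_row (submatrix A I UNIV * submatrix B UNIV J)"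
      and j: "j < dim_col (submatrix A I UNIV * submatrix B UNIV J)"
    hence i': "i < d" and j': "j < d" using dX dY by auto
    have pi: "pick I i < n" using pick_in_set_le[of i I] ID i' by auto
    have pj: "pick J j < n" using pick_in_set_le[of j J] JD j' by auto
    have "submatrix (A * B) I J $$ (i,j) = (A * B) $$ (pick I i, pick J j)"
      using A B ID JD i' j' by (subst submatrix_index) auto
    also have "\<dots> = (\<Sum>k<n. A $$ (pick I i, k) * B $$ (k, pick J j))"
      using A B pi pj by (simp add: scalar_prod_def atLeast0LessThan)
    also have "\<dots> = (submatrix A I UNIV * submatrix B UNIV J) $$ (i,j)"
    proof -
      have "(submatrix A I UNIV * submatrix B UNIV J) $$ (i,j)
          = (\<Sum>k<n. submatrix A I UNIV $$ (i,k) * submatrix B UNIV J $$ (k,j))"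
        using dX dY i' j' by (simp add: scalar_prod_def atLeast0LessThan)
      also have "\<dots> = (\<Sum>k<n. A $$ (pick I i, k) * B $$ (k, pick J j))"
        by (rule sum.cong[OF refl]) (use A B ID JD i' j' cU in \<open>auto simp: submatrix_index pick_UNIV\<close>)
      finally show ?thesis by simp
    qed
    finally show "submatrix (A * B) I J $$ (i, j) = (submatrix A I UNIV * submatrix B UNIV J) $$ (i, j)" .
  qed
qed

lemma submatrix_submatrix1:
  assumes K: "K \<in> dsubsets n d" and A: "A \<in> carrier_mat n n" and I: "I \<in> dsubsets n d"
  shows "submatrix (submatrix A I UNIV) UNIV K = submatrix A I K"
proof -
  note ID = dsubsets_D[OF I] and KD = dsubsets_D[OF K]
  have cU: "{j. j < n \<and> j \<in> (UNIV::nat set)} = {..<n}" by auto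
  have cU2: "{j. j < d \<and> j \<in> (UNIV::nat set)} = {..<d}" by auto
  have X: "submatrix A I UNIV \<in> carrier_mat d n" using A ID cU by (auto simp: dim_submatrix)
  show ?thesis
  proof (rule eq_matI)
    fix i j assume i: "i < dim_row (submatrix A I K)" and j: "j < dim_col (submatrix A I K)"
    hence i': "i < d" and j': "j < d" using A ID KD by (auto simp: dim_submatrix)
    have pk: "pick K j < n" using pick_in_set_le[of j K] KD j' by auto
    have "submatrix (submatrix A I UNIV) UNIV K $$ (i,j) = submatrix A I UNIV $$ (i, pick K j)"
      using X i' j' KD cU2 by (subst submatrix_index) (auto simp: pick_UNIV)
    also have "\<dots> = A $$ (pick I i, pick K j)"
      using A ID i' pk cU by (subst submatrix_index) (auto simp: pick_UNIV)
    also have "\<dots> = submatrix A I K $$ (i,j)"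
      using A ID KD i' j' by (subst submatrix_index) auto
    finally show "submatrix (submatrix A I UNIV) UNIV K $$ (i,j) = submatrix A I K $$ (i,j)" .
  qed (use A X ID KD cU cU2 in \<open>auto simp: dim_submatrix\<close>)
qed

lemma submatrix_submatrix2:
  assumes K: "K \<in> dsubsets n d" and B: "B \<in> carrier_mat n n" and J: "J \<in> dsubsets n d"
  shows "submatrix (submatrix B UNIV J) K UNIV = submatrix B K J"
proof -
  note JD = dsubsets_D[OF J] and KD = dsubsets_D[OF K]
  have cU: "{j. j < n \<and> j \<in> (UNIV::nat set)} = {..<n}" by auto
  have cU2: "{j. j < d \<and> j \<in> (UNIV::nat set)} = {..<d}" by auto
  have Y: "submatrix B UNIV J \<in> carrier_mat n d" using B JD cU by (auto simp: dim_submatrix)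
  show ?thesis
  proof (rule eq_matI)
    fix i j assume i: "i < dim_row (submatrix B K J)" and j: "j < dim_col (submatrix B K J)"
    hence i': "i < d" and j': "j < d" using B JD KD by (auto simp: dim_submatrix)
    have pk: "pick K i < n" using pick_in_set_le[of i K] KD i' by auto
    have "submatrix (submatrix B UNIV J) K UNIV $$ (i,j) = submatrix B UNIV J $$ (pick K i, j)"
      using Y i' j' KD cU2 by (subst submatrix_index) (auto simp: pick_UNIV)
    also have "\<dots> = B $$ (pick K i, pick J j)"
      using B JD j' pk cU by (subst submatrix_index) (auto simp: pick_UNIV)
    also have "\<dots> = submatrix B K J $$ (i,j)"
      using B JD KD i' j' by (subst submatrix_index) auto
    finally show "submatrix (submatrix B UNIV J) K UNIV $$ (i,j) = submatrix B K J $$ (i,j)" .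
  qed (use B Y JD KD cU cU2 in \<open>auto simp: dim_submatrix\<close>)
qed

lemma compound_mult:
  fixes A B :: "'a::comm_ring_1 mat"
  assumes A: "A \<in> carrier_mat n n" and B: "B \<in> carrier_mat n n"
    and I: "I \<in> dsubsets n d" and J: "J \<in> dsubsets n d"
  shows "compound (A * B) I J = (\<Sum>K\<in>dsubsets n d. compound A I K * compound B K J)"
proof -
  note ID = dsubsets_D[OF I] and JD = dsubsets_D[OF J]
  have cU: "{j. j < n \<and> j \<in> (UNIV::nat set)} = {..<n}" by auto
  have dX: "submatrix A I UNIV \<in> carrier_mat d n" using A ID cU by (auto simp: dim_submatrix)
  have dY: "submatrix B UNIV J \<in> carrier_mat n d" using B JD cU by (auto simp: dim_submatrix)
  show ?thesis
    unfolding compound_def submatrix_mult[OF A B I J] cauchy_binet[OF dX dY]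
  proof (rule sum.cong[OF refl])
    fix K assume K: "K \<in> dsubsets n d"
    show "det (submatrix (submatrix A I UNIV) UNIV K) * det (submatrix (submatrix B UNIV J) K UNIV) =
      det (submatrix A I K) * det (submatrix B K J)"
      unfolding submatrix_submatrix1[OF K A I] submatrix_submatrix2[OF K B J] ..
  qed
qed

lemma det_zero_row_mat:
  fixes M :: "'a::comm_ring_1 mat"
  assumes M: "M \<in> carrier_mat d d" and a: "a < d" and z: "\<And>b. b < d \<Longrightarrow> M $$ (a,b) = 0"
  shows "det M = 0"
proof -
  have "\<And>p. p permutes {0..<d} \<Longrightarrow> (\<Prod>i = 0..<d. M $$ (i, p i)) = 0"
    by (rule prod_zero) (use a z permutes_in_image in fastforce)+
  thus ?thesis unfolding det_def'[OF M] by simp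
qed

lemma det_id_except_row:
  fixes M :: "'a::comm_ring_1 mat"
  assumes M: "M \<in> carrier_mat d d" and k: "k < d"
    and r: "\<And>i j. i < d \<Longrightarrow> j < d \<Longrightarrow> i \<noteq> k \<Longrightarrow> M $$ (i,j) = (if i = j then 1 else 0)"
  shows "det M = M $$ (k,k)"
proof -
  let ?S = "{p. p permutes {0..<d}}"
  have z: "(\<Prod>i = 0..<d. M $$ (i, p i)) = 0" if p: "p permutes {0..<d}" "p \<noteq> id" for p
  proof -
    have "\<exists>i<d. i \<noteq> k \<and> p i \<noteq> i"
    proof (rule ccontr)
      assume "\<not> ?thesis"
      hence fix1: "\<And>i. i < d \<Longrightarrow> i \<noteq> k \<Longrightarrow> p i = i" by auto
      have "p k = k"
      proof (rule ccontr)
        assume pk: "p k \<noteq> k"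
        have "p k < d" using p(1) k permutes_in_image by fastforce
        hence "p (p k) = p k" using fix1 pk by auto
        hence "p k = k" using permutes_inj[OF p(1)] by (auto simp: inj_def)
        with pk show False ..
      qed
      hence "\<And>i. p i = i" using fix1 p(1) unfolding permutes_def by (metis atLeastLessThan_iff zero_le)
      hence "p = id" by auto
      with p(2) show False ..
    qed
    then obtain i where i: "i < d" "i \<noteq> k" "p i \<noteq> i" by auto
    have "p i < d" using p(1) i permutes_in_image by fastforce
    hence "M $$ (i, p i) = 0" using r[OF i(1) _ i(2)] i(3) by auto
    thus ?thesis by (intro prod_zero) (use i in auto)
  qed
  have "det M = (\<Sum>p\<in>?S. signof p * (\<Prod>i = 0..<d. M $$ (i, p i)))" by (rule det_def'[OF M])
  also have "\<dots> = (\<Sum>p\<in>{id}. signof p * (\<Prod>i = 0..<d. M $$ (i, p i)))"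
    by (rule sum.mono_neutral_right) (auto simp: finite_permutations permutes_id z)
  also have "\<dots> = (\<Prod>i = 0..<d. M $$ (i, i))" by simp
  also have "\<dots> = M $$ (k,k)"
  proof -
    have "(\<Prod>i = 0..<d. M $$ (i, i)) = (\<Prod>i \<in> {k}. M $$ (i, i))"
      by (rule prod.mono_neutral_right) (use k r in auto)
    thus ?thesis by simp
  qed
  finally show ?thesis .
qed

lemma compound_idrows:
  fixes A :: "'a::comm_ring_1 mat"
  assumes A: "A \<in> carrier_mat n n" and I: "I \<in> dsubsets n d" and J: "J \<in> dsubsets n d"
    and r: "\<And>i j. i \<in> I \<Longrightarrow> j < n \<Longrightarrow> A $$ (i,j) = (if i = j then 1 else 0)"
  shows "compound A I J = (if I = J then 1 else 0)"
proof -
  note ID = dsubsets_D[OF I] and JD = dsubsets_D[OF J]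
  have S: "submatrix A I J \<in> carrier_mat d d" using A ID JD by (auto simp: dim_submatrix)
  have Si: "\<And>a b. a < d \<Longrightarrow> b < d \<Longrightarrow> submatrix A I J $$ (a,b) = (if pick I a = pick J b then 1 else 0)"
  proof -
    fix a b assume ab: "a < d" "b < d"
    have "pick I a \<in> I" "pick J b \<in> J" using pick_in_set_le ID JD ab by auto
    thus "submatrix A I J $$ (a,b) = (if pick I a = pick J b then 1 else 0)"
      using A ID JD ab r by (subst submatrix_index) auto
  qed
  show ?thesis
  proof (cases "I = J")
    case True
    have "submatrix A I J = 1\<^sub>m d"
      by (rule eq_matI) (use S Si True pick_inj[of J] JD in \<open>auto simp: inj_on_def\<close>)
    thus ?thesis unfolding compound_def using True by simp
  next
    case False
    have "\<not> I \<subseteq> J"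
    proof
      assume "I \<subseteq> J"
      hence "I = J" using card_subset_eq[OF JD(3)] ID JD by auto
      with False show False ..
    qed
    then obtain i where i: "i \<in> I" "i \<notin> J" by auto
    define a where "a = card {x\<in>I. x < i}"
    have "card {x\<in>I. x < i} < card I"
      by (rule psubset_card_mono[OF ID(3)]) (use i in auto)
    hence a: "a < d" unfolding a_def using ID by simp
    have pa: "pick I a = i" unfolding a_def by (rule pick_card_in_set[OF i(1)])
    have "det (submatrix A I J) = 0"
    proof (rule det_zero_row_mat[OF S a])
      fix b assume b: "b < d"
      have "pick J b \<in> J" using pick_in_set_le JD b by auto
      thus "submatrix A I J $$ (a, b) = 0" using Si[OF a b] pa i by auto
    qed
    thus ?thesis unfolding compound_def using False by simp
  qed
qed

lemma compound_one:
  assumes I: "I \<in> dsubsets n d" and J: "J \<in> dsubsets n d"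
  shows "compound (1\<^sub>m n :: 'a::comm_ring_1 mat) I J = (if I = J then 1 else 0)"
proof (rule compound_idrows[OF one_carrier_mat I J])
  fix i j assume i: "i \<in> I" and j: "j < n"
  have "i < n" using dsubsets_D(1)[OF I] i by auto
  thus "(1\<^sub>m n :: 'a mat) $$ (i, j) = (if i = j then 1 else 0)" using j by simp
qed

definition mmD :: "nat set set \<Rightarrow> (nat set \<Rightarrow> nat set \<Rightarrow> 'a::comm_ring_1) \<Rightarrow> (nat set \<Rightarrow> nat set \<Rightarrow> 'a) \<Rightarrow> nat set \<Rightarrow> nat set \<Rightarrow> 'a" where
  "mmD D F G I J = (\<Sum>K\<in>D. F I K * G K J)"
definition mvD :: "nat set set \<Rightarrow> (nat set \<Rightarrow> nat set \<Rightarrow> 'a::comm_ring_1) \<Rightarrow> (nat set \<Rightarrow> 'a) \<Rightarrow> nat set \<Rightarrow> 'a" where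
  "mvD D F w I = (\<Sum>K\<in>D. F I K * w K)"
definition idD :: "nat set \<Rightarrow> nat set \<Rightarrow> 'a::comm_ring_1" where
  "idD I J = (if I = J then 1 else 0)"
definition Mc :: "'a::comm_ring_1 mat \<Rightarrow> nat set \<Rightarrow> nat set \<Rightarrow> 'a" where
  "Mc A I J = compound A I J - idD I J"

lemma mvD_mvD: "mvD D F (mvD D G w) I = mvD D (mmD D F G) w I"
proof -
  have "mvD D F (mvD D G w) I = (\<Sum>K\<in>D. \<Sum>L\<in>D. F I K * (G K L * w L))"
    unfolding mvD_def by (simp add: sum_distrib_left)
  also have "\<dots> = (\<Sum>L\<in>D. \<Sum>K\<in>D. F I K * (G K L * w L))" by (rule sum.swap)
  also have "\<dots> = mvD D (mmD D F G) w I"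
    unfolding mvD_def mmD_def by (simp add: sum_distrib_right mult.assoc)
  finally show ?thesis .
qed

lemma mmD_assoc: "mmD D (mmD D F G) H I J = mmD D F (mmD D G H) I J"
proof -
  have "mmD D (mmD D F G) H I J = (\<Sum>L\<in>D. \<Sum>K\<in>D. F I K * (G K L * H L J))"
    unfolding mmD_def by (simp add: sum_distrib_right mult.assoc)
  also have "\<dots> = (\<Sum>K\<in>D. \<Sum>L\<in>D. F I K * (G K L * H L J))" by (rule sum.swap)
  also have "\<dots> = mmD D F (mmD D G H) I J"
    unfolding mmD_def by (simp add: sum_distrib_left)
  finally show ?thesis .
qed

lemma mvD_cong: "(\<And>K. K \<in> D \<Longrightarrow> F I K = G I K) \<Longrightarrow> (\<And>K. K \<in> D \<Longrightarrow> w K = w' K) \<Longrightarrow>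
  mvD D F w I = mvD D G w' I"
  unfolding mvD_def by (rule sum.cong) auto

lemma mmD_cong: "(\<And>K. K \<in> D \<Longrightarrow> F I K = F' I K) \<Longrightarrow> (\<And>K. K \<in> D \<Longrightarrow> G K J = G' K J) \<Longrightarrow>
  mmD D F G I J = mmD D F' G' I J"
  unfolding mmD_def by (rule sum.cong) auto

lemma mvD_id: assumes "finite D" "I \<in> D" shows "mvD D idD w I = w I"
proof -
  have "mvD D idD w I = (\<Sum>K\<in>D. if I = K then w K else 0)"
    unfolding mvD_def idD_def by (rule sum.cong) auto
  also have "\<dots> = w I" using assms by simp
  finally show ?thesis .
qed

lemma mmD_id_right: assumes "finite D" "J \<in> D" shows "mmD D F idD I J = F I J"
proof -
  have "mmD D F idD I J = (\<Sum>K\<in>D. if K = J then F I K else 0)"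
    unfolding mmD_def idD_def by (rule sum.cong) auto
  also have "\<dots> = F I J" using assms by simp
  finally show ?thesis .
qed

lemma mmD_id_left: assumes "finite D" "I \<in> D" shows "mmD D idD F I J = F I J"
proof -
  have "mmD D idD F I J = (\<Sum>K\<in>D. if I = K then F K J else 0)"
    unfolding mmD_def idD_def by (rule sum.cong) auto
  also have "\<dots> = F I J" using assms by simp
  finally show ?thesis .
qed

lemma transport:
  assumes int: "\<And>I J. I \<in> D \<Longrightarrow> J \<in> D \<Longrightarrow> mmD D X F I J = mmD D G X I J"
    and w: "\<And>I. I \<in> D \<Longrightarrow> \<omega> I = mvD D F \<theta> I"
    and I: "I \<in> D"
  shows "mvD D X \<omega> I = mvD D G (mvD D X \<theta>) I"
proof -
  have "mvD D X \<omega> I = mvD D X (mvD D F \<theta>) I" by (rule mvD_cong) (use w in auto)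
  also have "\<dots> = mvD D (mmD D X F) \<theta> I" by (rule mvD_mvD)
  also have "\<dots> = mvD D (mmD D G X) \<theta> I" by (rule mvD_cong) (use int I in auto)
  also have "\<dots> = mvD D G (mvD D X \<theta>) I" by (rule mvD_mvD[symmetric])
  finally show ?thesis .
qed

lemma Mc_intertwine:
  assumes fin: "finite D"
    and int: "\<And>I J. I \<in> D \<Longrightarrow> J \<in> D \<Longrightarrow> mmD D X (compound A) I J = mmD D (compound B) X I J"
    and I: "I \<in> D" and J: "J \<in> D"
  shows "mmD D X (Mc A) I J = mmD D (Mc B) X I J"
proof -
  have "mmD D X (Mc A) I J = mmD D X (compound A) I J - mmD D X idD I J"
    unfolding mmD_def Mc_def by (simp add: right_diff_distrib sum_subtractf)
  also have "mmD D X idD I J = X I J" by (rule mmD_id_right[OF fin J])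
  also have "mmD D X (compound A) I J = mmD D (compound B) X I J" by (rule int[OF I J])
  also have "mmD D (compound B) X I J - X I J = mmD D (Mc B) X I J"
  proof -
    have "mmD D (Mc B) X I J = mmD D (compound B) X I J - mmD D idD X I J"
      unfolding mmD_def Mc_def by (simp add: left_diff_distrib sum_subtractf)
    also have "mmD D idD X I J = X I J" by (rule mmD_id_left[OF fin I])
    finally show ?thesis by simp
  qed
  finally show ?thesis .
qed

lemma compound_conj:
  fixes P Q A :: "'a::comm_ring_1 mat"
  assumes P: "P \<in> carrier_mat n n" and Q: "Q \<in> carrier_mat n n" and A: "A \<in> carrier_mat n n"
    and QP: "Q * P = 1\<^sub>m n"
    and I: "I \<in> dsubsets n d" and J: "J \<in> dsubsets n d"
  shows "mmD (dsubsets n d) (compound P) (compound A) I J = mmD (dsubsets n d) (compound (P * A * Q)) (compound P) I J"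
proof -
  have PA: "P * A \<in> carrier_mat n n" using P A by auto
  have PAQ: "P * A * Q \<in> carrier_mat n n" using P A Q by auto
  have eq: "P * A * Q * P = P * A"
    using assoc_mult_mat[OF PA Q P] QP right_mult_one_mat[OF PA] by simp
  show ?thesis
    unfolding mmD_def compound_mult[OF P A I J, symmetric] compound_mult[OF PAQ P I J, symmetric] eq ..
qed

lemma compound_inv:
  fixes P Q :: "'a::comm_ring_1 mat"
  assumes P: "P \<in> carrier_mat n n" and Q: "Q \<in> carrier_mat n n"
    and PQ: "P * Q = 1\<^sub>m n"
    and I: "I \<in> dsubsets n d" and J: "J \<in> dsubsets n d"
  shows "mmD (dsubsets n d) (compound P) (compound Q) I J = idD I J"
  unfolding mmD_def compound_mult[OF P Q I J, symmetric] PQ compound_one[OF I J] idD_def ..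

lemma foldr_vec:
  assumes "\<And>t. t \<in> set xs \<Longrightarrow> v t \<in> carrier_vec n"
  shows "foldr (\<lambda>i acc. c i \<cdot>\<^sub>v v i + acc) xs (0\<^sub>v n) = vec n (\<lambda>j. sum_list (map (\<lambda>i. c i * v i $ j) xs))"
  using assms
proof (induction xs)
  case Nil
  then show ?case by (auto intro!: eq_vecI)
next
  case (Cons x xs)
  have vx: "v x \<in> carrier_vec n" using Cons.prems by auto
  have IH: "foldr (\<lambda>i acc. c i \<cdot>\<^sub>v v i + acc) xs (0\<^sub>v n) = vec n (\<lambda>j. sum_list (map (\<lambda>i. c i * v i $ j) xs))"
    using Cons by auto
  show ?case by (simp add: IH) (rule eq_vecI, use vx in auto)
qed

definition colmat :: "nat \<Rightarrow> nat \<Rightarrow> (nat \<Rightarrow> 'a vec) \<Rightarrow> 'a mat" where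
  "colmat n m v = mat n m (\<lambda>(i,t). v t $ i)"

lemma colmat_carrier: "colmat n m v \<in> carrier_mat n m" unfolding colmat_def by simp

lemma colmat_col: "t < m \<Longrightarrow> v t \<in> carrier_vec n \<Longrightarrow> col (colmat n m v) t = v t"
  unfolding colmat_def by (auto intro!: eq_vecI)

lemma colmat_mult: "c \<in> carrier_vec m \<Longrightarrow> colmat n m v *\<^sub>v c = vec n (\<lambda>j. \<Sum>t<m. v t $ j * c $ t)"
  unfolding colmat_def by (auto intro!: eq_vecI simp: scalar_prod_def atLeast0LessThan)

lemma lif_iff:
  fixes v :: "nat \<Rightarrow> 'a::field vec"
  assumes v: "\<And>t. t < m \<Longrightarrow> v t \<in> carrier_vec n"
  shows "lin_indep_family n m v \<longleftrightarrow> (\<forall>c\<in>carrier_vec m. colmat n m v *\<^sub>v c = 0\<^sub>v n \<longrightarrow> c = 0\<^sub>v m)"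
proof -
  have fe: "foldr (\<lambda>i acc. c i \<cdot>\<^sub>v v i + acc) [0..<m] (0\<^sub>v n) = colmat n m v *\<^sub>v vec m c" for c
  proof -
    have "foldr (\<lambda>i acc. c i \<cdot>\<^sub>v v i + acc) [0..<m] (0\<^sub>v n) = vec n (\<lambda>j. sum_list (map (\<lambda>i. c i * v i $ j) [0..<m]))"
      by (rule foldr_vec) (use v in auto)
    also have "\<dots> = vec n (\<lambda>j. \<Sum>t<m. v t $ j * vec m c $ t)"
      by (rule eq_vecI) (auto simp: interv_sum_list_conv_sum_set_nat atLeast0LessThan mult.commute)
    finally show ?thesis by (subst colmat_mult) auto
  qed
  show ?thesis
  proof
    assume L: "lin_indep_family n m v"
    show "\<forall>c\<in>carrier_vec m. colmat n m v *\<^sub>v c = 0\<^sub>v n \<longrightarrow> c = 0\<^sub>v m"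
    proof (intro ballI impI)
      fix c :: "'a vec" assume c: "c \<in> carrier_vec m" and z: "colmat n m v *\<^sub>v c = 0\<^sub>v n"
      have cc: "vec m (\<lambda>t. c $ t) = c" using c by (auto intro!: eq_vecI)
      have "foldr (\<lambda>i acc. (\<lambda>t. c $ t) i \<cdot>\<^sub>v v i + acc) [0..<m] (0\<^sub>v n) = 0\<^sub>v n"
        unfolding fe cc z ..
      hence "\<forall>i<m. c $ i = 0" using L unfolding lin_indep_family_def by blast
      thus "c = 0\<^sub>v m" using c by (auto intro!: eq_vecI)
    qed
  next
    assume R: "\<forall>c\<in>carrier_vec m. colmat n m v *\<^sub>v c = 0\<^sub>v n \<longrightarrow> c = 0\<^sub>v m"
    show "lin_indep_family n m v" unfolding lin_indep_family_def
    proof (intro conjI allI impI)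
      fix c :: "nat \<Rightarrow> 'a" and i
      assume "foldr (\<lambda>i acc. c i \<cdot>\<^sub>v v i + acc) [0..<m] (0\<^sub>v n) = 0\<^sub>v n" and i: "i < m"
      hence "vec m c = 0\<^sub>v m" using R unfolding fe by auto
      thus "c i = 0" using i by (metis index_vec index_zero_vec(1))
    qed (use v in auto)
  qed
qed

lemma gj_indep:
  fixes G :: "'a::field mat"
  assumes G: "G \<in> carrier_mat n m"
    and ker: "\<And>c. c \<in> carrier_vec m \<Longrightarrow> G *\<^sub>v c = 0\<^sub>v n \<Longrightarrow> c = 0\<^sub>v m"
  shows "\<exists>P Q p. P \<in> carrier_mat n n \<and> Q \<in> carrier_mat n n \<and> P * Q = 1\<^sub>m n \<and> Q * P = 1\<^sub>m n \<and>
     inj_on p {0..<m} \<and> (\<forall>t<m. p t < n \<and> p t \<le> t \<and> P *\<^sub>v col G t = unit_vec n (p t))"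
proof -
  obtain R where gR: "gauss_jordan_single G = R" by auto
  note gj = gauss_jordan_single[OF G gR]
  obtain P Q where PQ: "R = P * G" "P \<in> carrier_mat n n" "Q \<in> carrier_mat n n" "P * Q = 1\<^sub>m n" "Q * P = 1\<^sub>m n"
    using gj(4) by blast
  have R: "R \<in> carrier_mat n m" by (rule gj(2))
  obtain f where piv: "pivot_fun R f m" using gj(3) R unfolding row_echelon_form_def by auto
  have dimR: "dim_row R = n" using R by auto
  note pD = pivot_funD[OF dimR piv]
  have all: "snd ` set (pivot_positions R) = {0..<m}"
  proof (rule ccontr)
    assume ne: "snd ` set (pivot_positions R) \<noteq> {0..<m}"
    note fb = find_base_vector[OF gj(3) R ne]
    have "G *\<^sub>v find_base_vector R = 0\<^sub>v n" using gj(1)[OF fb(1)] fb(3) by simp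
    hence "find_base_vector R = 0\<^sub>v m" using ker fb(1) by auto
    with fb(2) show False ..
  qed
  have ex: "\<forall>t<m. \<exists>i. i < n \<and> f i = t"
  proof (intro allI impI)
    fix t assume "t < m"
    hence "t \<in> snd ` set (pivot_positions R)" using all by auto
    thus "\<exists>i. i < n \<and> f i = t" unfolding pivot_positions[OF R piv] by auto
  qed
  define p where "p t = (SOME i. i < n \<and> f i = t)" for t
  have p: "\<And>t. t < m \<Longrightarrow> p t < n \<and> f (p t) = t"
    unfolding p_def using ex by (metis (mono_tags, lifting) someI_ex)
  have inj: "inj_on p {0..<m}"
    by (rule inj_onI) (metis atLeastLessThan_iff p)
  have le: "p t \<le> t" if t: "t < m" for t
  proof -
    have "f (0 + p t) = m \<or> p t + f 0 \<le> f (0 + p t)"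
      by (rule pivot_bound[OF dimR piv]) (use p[OF t] in simp)
    thus ?thesis using p[OF t] t by auto
  qed
  have colR: "col R t = unit_vec n (p t)" if t: "t < m" for t
  proof (rule eq_vecI)
    fix i assume i: "i < dim_vec (unit_vec n (p t))"
    hence i': "i < n" by simp
    have ft: "f (p t) < m" using p[OF t] t by simp
    show "col R t $ i = unit_vec n (p t) $ i"
    proof (cases "i = p t")
      case True
      thus ?thesis using pD(4)[of "p t"] p[OF t] ft i' R t by auto
    next
      case False
      thus ?thesis using pD(5)[of "p t" i] p[OF t] ft i' R t by auto
    qed
  qed (use R in auto)
  have "\<forall>t<m. p t < n \<and> p t \<le> t \<and> P *\<^sub>v col G t = unit_vec n (p t)"
  proof (intro allI impI conjI)
    fix t assume t: "t < m"
    show "p t < n" "p t \<le> t" using p[OF t] le[OF t] by auto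
    have "P *\<^sub>v col G t = col R t" unfolding PQ(1) by (rule col_mult2[symmetric, OF PQ(2) G t])
    thus "P *\<^sub>v col G t = unit_vec n (p t)" using colR[OF t] by simp
  qed
  thus ?thesis using PQ inj by blast
qed

lemma gj_dep:
  fixes G :: "'a::field mat"
  assumes G: "G \<in> carrier_mat n (Suc d)"
    and c: "c \<in> carrier_vec (Suc d)" "c \<noteq> 0\<^sub>v (Suc d)" "G *\<^sub>v c = 0\<^sub>v n"
  shows "\<exists>P Q. P \<in> carrier_mat n n \<and> Q \<in> carrier_mat n n \<and> P * Q = 1\<^sub>m n \<and> Q * P = 1\<^sub>m n \<and>
     (\<forall>t<Suc d. \<forall>i. d \<le> i \<longrightarrow> i < n \<longrightarrow> (P *\<^sub>v col G t) $ i = 0)"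
proof -
  define m where "m = Suc d"
  have G': "G \<in> carrier_mat n m" using G m_def by simp
  obtain R where gR: "gauss_jordan_single G = R" by auto
  note gj = gauss_jordan_single[OF G' gR]
  obtain P Q where PQ: "R = P * G" "P \<in> carrier_mat n n" "Q \<in> carrier_mat n n" "P * Q = 1\<^sub>m n" "Q * P = 1\<^sub>m n"
    using gj(4) by blast
  have R: "R \<in> carrier_mat n m" by (rule gj(2))
  obtain f where piv: "pivot_fun R f m" using gj(3) R unfolding row_echelon_form_def by auto
  have dimR: "dim_row R = n" using R by auto
  note pD = pivot_funD[OF dimR piv]
  have P0: "P *\<^sub>v 0\<^sub>v n = 0\<^sub>v n" by (rule eq_vecI) (use PQ(2) in \<open>auto simp: scalar_prod_def\<close>)
  have Rc: "R *\<^sub>v c = 0\<^sub>v n"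
    using PQ(1) assoc_mult_mat_vec[OF PQ(2) G' c(1)[folded m_def]] c(3) P0 by simp
  have zero: "R $$ (i,t) = 0" if it: "d \<le> i" "i < n" "t < m" for i t
  proof (rule ccontr)
    assume nz: "R $$ (i,t) \<noteq> 0"
    have fi: "f i \<noteq> m"
    proof
      assume "f i = m"
      hence "R $$ (i,t) = 0" using pD(2)[OF it(2), of t] it by auto
      with nz show False ..
    qed
    have fim: "f i < m" using pD(1)[OF it(2)] fi by auto
    have "f (0 + i) = m \<or> i + f 0 \<le> f (0 + i)" by (rule pivot_bound[OF dimR piv]) (use it in simp)
    hence "i \<le> f i" using fi by auto
    hence id1: "i = d" using fim it(1) m_def by auto
    hence id: "i = d" "f d = d" using fim \<open>i \<le> f i\<close> m_def by auto
    have dn: "d < n" using it id by simp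
    have fs: "f s = s" if s: "s \<le> d" for s
    proof -
      have "f (s + (d - s)) = m \<or> (d - s) + f s \<le> f (s + (d - s))"
        by (rule pivot_bound[OF dimR piv]) (use s dn in simp)
      hence u: "f s \<le> s" using id(2) s m_def by auto
      have "f (0 + s) = m \<or> s + f 0 \<le> f (0 + s)"
        by (rule pivot_bound[OF dimR piv]) (use s dn in simp)
      hence "s \<le> f s" using u s m_def by auto
      with u show ?thesis by simp
    qed
    have Rd: "R $$ (s,t') = (if s = t' then 1 else 0)" if st: "s < m" "t' < m" for s t'
    proof -
      have sn: "s < n" "t' < n" using st dn m_def by auto
      have ft: "f t' = t'" using fs st m_def by simp
      show ?thesis
      proof (cases "s = t'")
        case True thus ?thesis using pD(4)[OF sn(2)] ft st by auto
      next
        case False thus ?thesis using pD(5)[OF sn(2) _ sn(1)] ft st by auto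
      qed
    qed
    have "c = 0\<^sub>v m"
    proof (rule eq_vecI)
      fix s assume "s < dim_vec (0\<^sub>v m :: 'a vec)"
      hence s: "s < m" by simp
      have "(R *\<^sub>v c) $ s = (\<Sum>t'<m. R $$ (s,t') * c $ t')"
        using R c(1) s dn m_def by (auto simp: scalar_prod_def atLeast0LessThan)
      also have "\<dots> = (\<Sum>t'<m. if s = t' then c $ t' else 0)"
        by (rule sum.cong[OF refl]) (use Rd s in auto)
      also have "\<dots> = c $ s" using s by simp
      finally have "c $ s = 0" using Rc s dn m_def by simp
      thus "c $ s = 0\<^sub>v m $ s" using s by simp
    qed (use c m_def in auto)
    with c(2) m_def show False by simp
  qed
  have "\<forall>t<Suc d. \<forall>i. d \<le> i \<longrightarrow> i < n \<longrightarrow> (P *\<^sub>v col G t) $ i = 0"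
  proof (intro allI impI)
    fix t i assume t: "t < Suc d" and i: "d \<le> i" "i < n"
    have "P *\<^sub>v col G t = col R t" unfolding PQ(1) by (rule col_mult2[symmetric, OF PQ(2) G]) (use t in simp)
    thus "(P *\<^sub>v col G t) $ i = 0" using zero[OF i, of t] t i R m_def by simp
  qed
  thus ?thesis using PQ by blast
qed

lemma mat_unit_entry:
  fixes M :: "'a::comm_ring_1 mat"
  assumes "M \<in> carrier_mat n n" "i < n" "j < n"
  shows "(M *\<^sub>v unit_vec n j) $ i = M $$ (i,j)"
proof -
  have "row M i \<bullet> unit_vec n j = (\<Sum>k\<in>{0..<n}. row M i $ k * unit_vec n j $ k)"
    unfolding scalar_prod_def by simp
  also have "\<dots> = (\<Sum>k\<in>{0..<n}. if j = k then M $$ (i,k) else 0)"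
    by (rule sum.cong[OF refl]) (use assms in auto)
  also have "\<dots> = M $$ (i,j)" using assms by simp
  finally show ?thesis using assms by simp
qed

lemma minus_one_mult:
  fixes M :: "'a::comm_ring_1 mat"
  assumes "M \<in> carrier_mat n n" "v \<in> carrier_vec n"
  shows "(M - 1\<^sub>m n) *\<^sub>v v = M *\<^sub>v v - v"
  using assms by (simp add: minus_mult_distrib_mat_vec)

lemma mult3_vec:
  fixes P A Q :: "'a::comm_ring_1 mat"
  assumes "P \<in> carrier_mat n n" "A \<in> carrier_mat n n" "Q \<in> carrier_mat n n" "v \<in> carrier_vec n"
  shows "P * A * Q *\<^sub>v v = P *\<^sub>v (A *\<^sub>v (Q *\<^sub>v v))"
proof -
  have 1: "(P*A*Q) *\<^sub>v v = (P*A) *\<^sub>v (Q *\<^sub>v v)" by (rule assoc_mult_mat_vec) (use assms in auto)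
  have 2: "(P*A) *\<^sub>v (Q *\<^sub>v v) = P *\<^sub>v (A *\<^sub>v (Q *\<^sub>v v))" by (rule assoc_mult_mat_vec) (use assms in auto)
  show ?thesis using 1 2 by simp
qed

lemma conj_rank1:
  fixes A P Q :: "'a::field mat"
  assumes A: "A \<in> carrier_mat n n" and P: "P \<in> carrier_mat n n" and Q: "Q \<in> carrier_mat n n"
    and g: "\<gamma> \<in> carrier_vec n"
    and rk: "\<And>v. v \<in> carrier_vec n \<Longrightarrow> \<exists>c. (A - 1\<^sub>m n) *\<^sub>v v = c \<cdot>\<^sub>v \<gamma>"
    and PQ: "P * Q = 1\<^sub>m n"
    and v: "v \<in> carrier_vec n"
  shows "\<exists>c. (P * A * Q - 1\<^sub>m n) *\<^sub>v v = c \<cdot>\<^sub>v (P *\<^sub>v \<gamma>)"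
proof -
  have Qv: "Q *\<^sub>v v \<in> carrier_vec n" using Q v by simp
  obtain c where c: "(A - 1\<^sub>m n) *\<^sub>v (Q *\<^sub>v v) = c \<cdot>\<^sub>v \<gamma>" using rk[OF Qv] by blast
  have PAQ: "P * A * Q \<in> carrier_mat n n" using P A Q by simp
  have "P * A * Q *\<^sub>v v = P *\<^sub>v (A *\<^sub>v (Q *\<^sub>v v))"
    by (rule mult3_vec[OF P A Q v])
  moreover have "v = P *\<^sub>v (Q *\<^sub>v v)"
    using P Q v PQ by (simp add: assoc_mult_mat_vec[symmetric])
  ultimately have "(P * A * Q - 1\<^sub>m n) *\<^sub>v v = P *\<^sub>v (A *\<^sub>v (Q *\<^sub>v v)) - P *\<^sub>v (Q *\<^sub>v v)"
    using minus_one_mult[OF PAQ v] by simp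
  also have "\<dots> = P *\<^sub>v (A *\<^sub>v (Q *\<^sub>v v) - Q *\<^sub>v v)"
    using P A Qv by (simp add: mult_minus_distrib_mat_vec)
  also have "\<dots> = P *\<^sub>v (c \<cdot>\<^sub>v \<gamma>)" using c minus_one_mult[OF A Qv] by simp
  also have "\<dots> = c \<cdot>\<^sub>v (P *\<^sub>v \<gamma>)" using P g by (simp add: mult_mat_vec)
  finally show ?thesis by blast
qed

lemma conj_eig:
  fixes A P Q :: "'a::field mat"
  assumes A: "A \<in> carrier_mat n n" and P: "P \<in> carrier_mat n n" and Q: "Q \<in> carrier_mat n n"
    and g: "\<gamma> \<in> carrier_vec n" and eig: "A *\<^sub>v \<gamma> = \<mu> \<cdot>\<^sub>v \<gamma>" and QP: "Q * P = 1\<^sub>m n"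
  shows "P * A * Q *\<^sub>v (P *\<^sub>v \<gamma>) = \<mu> \<cdot>\<^sub>v (P *\<^sub>v \<gamma>)"
proof -
  have QPg: "Q *\<^sub>v (P *\<^sub>v \<gamma>) = \<gamma>" using P Q g QP by (simp add: assoc_mult_mat_vec[symmetric])
  have "P * A * Q *\<^sub>v (P *\<^sub>v \<gamma>) = P *\<^sub>v (A *\<^sub>v (Q *\<^sub>v (P *\<^sub>v \<gamma>)))"
    by (rule mult3_vec[OF P A Q]) (use P g in simp)
  also have "\<dots> = P *\<^sub>v (\<mu> \<cdot>\<^sub>v \<gamma>)" unfolding QPg eig ..
  also have "\<dots> = \<mu> \<cdot>\<^sub>v (P *\<^sub>v \<gamma>)" using P g by (simp add: mult_mat_vec)
  finally show ?thesis .
qed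

lemma rows_id_from_rank:
  fixes M :: "'a::field mat"
  assumes M: "M \<in> carrier_mat n n" and k: "k < n"
    and rk: "\<And>v. v \<in> carrier_vec n \<Longrightarrow> \<exists>c. (M - 1\<^sub>m n) *\<^sub>v v = c \<cdot>\<^sub>v unit_vec n k"
    and i: "i < n" "i \<noteq> k" and j: "j < n"
  shows "M $$ (i,j) = (if i = j then 1 else 0)"
proof -
  have u: "unit_vec n j \<in> carrier_vec n" by simp
  obtain c where c: "(M - 1\<^sub>m n) *\<^sub>v unit_vec n j = c \<cdot>\<^sub>v unit_vec n k" using rk[OF u] by blast
  have "((M - 1\<^sub>m n) *\<^sub>v unit_vec n j) $ i = M $$ (i,j) - (if i = j then 1 else 0)"
    unfolding minus_one_mult[OF M u] using mat_unit_entry[OF M i(1) j] i j by simp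
  moreover have "(c \<cdot>\<^sub>v unit_vec n k) $ i = 0" using i by (simp add: unit_vec_def)
  ultimately show ?thesis using c by simp
qed

lemma mdl:
  fixes N :: "'a::field mat"
  assumes N: "N \<in> carrier_mat d d" and x: "x \<in> carrier_vec d" "x \<noteq> 0\<^sub>v d"
    and rk: "\<And>v. v \<in> carrier_vec d \<Longrightarrow> \<exists>c. (N - 1\<^sub>m d) *\<^sub>v v = c \<cdot>\<^sub>v x"
    and eig: "N *\<^sub>v x = \<mu> \<cdot>\<^sub>v x"
  shows "det N = \<mu>"
proof -
  define G where "G = colmat d 1 (\<lambda>_. x)"
  have G: "G \<in> carrier_mat d 1" unfolding G_def by (rule colmat_carrier)
  have ker: "c = 0\<^sub>v 1" if c: "c \<in> carrier_vec 1" "G *\<^sub>v c = 0\<^sub>v d" for c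
  proof -
    obtain j where j: "j < d" "x $ j \<noteq> 0" using x by (metis eq_vecI carrier_vecD index_zero_vec)
    have "(G *\<^sub>v c) $ j = x $ j * c $ 0" unfolding G_def colmat_mult[OF c(1)] using j by simp
    hence "c $ 0 = 0" using c(2) j by simp
    thus ?thesis using c(1) by (auto intro!: eq_vecI)
  qed
  obtain P Q p where PQ: "P \<in> carrier_mat d d" "Q \<in> carrier_mat d d" "P * Q = 1\<^sub>m d" "Q * P = 1\<^sub>m d"
    and pp: "\<forall>t<1. p t < d \<and> p t \<le> t \<and> P *\<^sub>v col G t = unit_vec d (p t)"
    using gj_indep[OF G ker] by blast
  have d0: "0 < d" and Px: "P *\<^sub>v x = unit_vec d 0"
    using pp colmat_col[of 0 1 "\<lambda>_. x" d] x(1) unfolding G_def by auto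
  define N' where "N' = P * N * Q"
  have N': "N' \<in> carrier_mat d d" unfolding N'_def using PQ N by simp
  have "det N' = det P * det N * det Q" unfolding N'_def using PQ N by (simp add: det_mult)
  also have "det P * det Q = 1" using det_mult[OF PQ(1) PQ(2)] PQ(3) by simp
  hence "det P * det N * det Q = det N" by (simp add: algebra_simps)
  finally have dN: "det N' = det N" .
  have rk': "\<exists>c. (N' - 1\<^sub>m d) *\<^sub>v v = c \<cdot>\<^sub>v unit_vec d 0" if v: "v \<in> carrier_vec d" for v
    using conj_rank1[OF N PQ(1) PQ(2) x(1) rk PQ(3) v] Px unfolding N'_def by simp
  have "det N' = N' $$ (0,0)"
    by (rule det_id_except_row[OF N' d0]) (rule rows_id_from_rank[OF N' d0 rk'], auto)
  also have "N' $$ (0,0) = (N' *\<^sub>v unit_vec d 0) $ 0" using mat_unit_entry[OF N' d0 d0] by simp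
  also have "N' *\<^sub>v unit_vec d 0 = \<mu> \<cdot>\<^sub>v unit_vec d 0"
    using conj_eig[OF N PQ(1) PQ(2) x(1) eig PQ(4)] Px unfolding N'_def by simp
  finally show ?thesis using dN d0 by simp
qed

lemma refl_ne1:
  fixes A :: "'a::field mat"
  assumes A: "A \<in> carrier_mat n n" and dg: "diagonalizable n A"
    and rk: "\<And>v. v \<in> carrier_vec n \<Longrightarrow> \<exists>c. (A - 1\<^sub>m n) *\<^sub>v v = c \<cdot>\<^sub>v \<gamma>"
    and gi: "\<gamma> \<in> refl_image n A" and g0: "\<gamma> \<noteq> 0\<^sub>v n" and eig: "A *\<^sub>v \<gamma> = \<mu> \<cdot>\<^sub>v \<gamma>"
  shows "\<mu> \<noteq> 1"
proof
  assume mu: "\<mu> = 1"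
  obtain v0 where v0: "v0 \<in> carrier_vec n" "\<gamma> = (A - 1\<^sub>m n) *\<^sub>v v0"
    using gi unfolding refl_image_def by blast
  have A1: "A - 1\<^sub>m n \<in> carrier_mat n n" using A by (intro minus_carrier_mat) auto
  have g: "\<gamma> \<in> carrier_vec n" using v0 A1 by simp
  have Ag: "(A - 1\<^sub>m n) *\<^sub>v \<gamma> = 0\<^sub>v n"
    unfolding minus_one_mult[OF A g] eig mu using g by simp
  have sq: "(A - 1\<^sub>m n) *\<^sub>v ((A - 1\<^sub>m n) *\<^sub>v v) = 0\<^sub>v n" if v: "v \<in> carrier_vec n" for v
  proof -
    obtain c where c: "(A - 1\<^sub>m n) *\<^sub>v v = c \<cdot>\<^sub>v \<gamma>" using rk[OF v] by blast
    have "(A - 1\<^sub>m n) *\<^sub>v (c \<cdot>\<^sub>v \<gamma>) = c \<cdot>\<^sub>v ((A - 1\<^sub>m n) *\<^sub>v \<gamma>)" by (rule mult_mat_vec[OF A1 g])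
    thus ?thesis unfolding c Ag by (auto intro!: eq_vecI)
  qed
  obtain D where D: "D \<in> carrier_mat n n" "diagonal_mat D" "similar_mat A D"
    using dg unfolding diagonalizable_def by blast
  obtain S T where ST: "similar_mat_wit A D S T" using D(3) unfolding similar_mat_def by blast
  have dA: "dim_row A = n" using A by simp
  have S: "S \<in> carrier_mat n n" and T: "T \<in> carrier_mat n n" and STm: "S * T = 1\<^sub>m n" "T * S = 1\<^sub>m n"
    and AST: "A = S * D * T"
    using ST unfolding similar_mat_wit_def Let_def dA by auto
  have Dd: "D $$ (i,j) = 0" if "i < n" "j < n" "i \<noteq> j" for i j
    using D(1,2) that unfolding diagonal_mat_def by auto
  have Djj: "D $$ (j,j) = 1" if j: "j < n" for j
  proof -
    define w :: "'a vec" where "w = unit_vec n j"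
    define v where "v = S *\<^sub>v w"
    have w: "w \<in> carrier_vec n" unfolding w_def by simp
    have v: "v \<in> carrier_vec n" unfolding v_def using S w by simp
    have Dw: "D *\<^sub>v w = D $$ (j,j) \<cdot>\<^sub>v w"
    proof (rule eq_vecI)
      fix i assume "i < dim_vec (D $$ (j,j) \<cdot>\<^sub>v w)"
      hence i: "i < n" using w by simp
      show "(D *\<^sub>v w) $ i = (D $$ (j,j) \<cdot>\<^sub>v w) $ i"
        unfolding w_def mat_unit_entry[OF D(1) i j] using i j Dd by (auto simp: unit_vec_def)
    qed (use D(1) w in simp)
    have TSw: "T *\<^sub>v (S *\<^sub>v w) = w" using S T w STm by (simp add: assoc_mult_mat_vec[symmetric])
    have Av: "A *\<^sub>v v = D $$ (j,j) \<cdot>\<^sub>v v"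
    proof -
      have "A *\<^sub>v v = S *\<^sub>v (D *\<^sub>v (T *\<^sub>v (S *\<^sub>v w)))" unfolding AST v_def by (rule mult3_vec[OF S D(1) T v[unfolded v_def]])
      also have "\<dots> = S *\<^sub>v (D $$ (j,j) \<cdot>\<^sub>v w)" unfolding TSw Dw ..
      also have "\<dots> = D $$ (j,j) \<cdot>\<^sub>v v" unfolding v_def by (rule mult_mat_vec[OF S w])
      finally show ?thesis .
    qed
    have A1v: "(A - 1\<^sub>m n) *\<^sub>v v = (D $$ (j,j) - 1) \<cdot>\<^sub>v v"
      unfolding minus_one_mult[OF A v] Av by (rule eq_vecI) (use v in \<open>auto simp: algebra_simps\<close>)
    have "(A - 1\<^sub>m n) *\<^sub>v ((A - 1\<^sub>m n) *\<^sub>v v) = (D $$ (j,j) - 1) \<cdot>\<^sub>v ((D $$ (j,j) - 1) \<cdot>\<^sub>v v)"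
      unfolding A1v mult_mat_vec[OF A1 v] A1v ..
    hence z: "(D $$ (j,j) - 1) \<cdot>\<^sub>v ((D $$ (j,j) - 1) \<cdot>\<^sub>v v) = 0\<^sub>v n" using sq[OF v] by simp
    have "v \<noteq> 0\<^sub>v n"
    proof
      assume "v = 0\<^sub>v n"
      hence "T *\<^sub>v v = 0\<^sub>v n" using T by (auto intro!: eq_vecI simp: scalar_prod_def)
      hence "w = 0\<^sub>v n" using TSw unfolding v_def by simp
      hence "w $ j = 0" using j by simp
      thus False unfolding w_def using j by simp
    qed
    then obtain i where i: "i < n" "v $ i \<noteq> 0" using v by (metis eq_vecI carrier_vecD index_zero_vec)
    have "(D $$ (j,j) - 1) * ((D $$ (j,j) - 1) * v $ i) = 0"
      using arg_cong[OF z, of "\<lambda>x. x $ i"] i v by simp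
    thus ?thesis using i(2) by simp
  qed
  have D1: "D = 1\<^sub>m n"
    by (rule eq_matI) (use D(1) Djj Dd in auto)
  have "A = 1\<^sub>m n" unfolding AST D1 using S T STm by simp
  hence "\<gamma> = 0\<^sub>v n" using v0 by (simp add: minus_one_mult[OF one_carrier_mat v0(1)])
  with g0 show False ..
qed

lemma entry_rank1:
  fixes M :: "'a::field mat"
  assumes M: "M \<in> carrier_mat n n" and x: "x \<in> carrier_vec n"
    and rk: "\<And>v. v \<in> carrier_vec n \<Longrightarrow> \<exists>c. (M - 1\<^sub>m n) *\<^sub>v v = c \<cdot>\<^sub>v x"
  shows "\<exists>g. \<forall>i<n. \<forall>j<n. M $$ (i,j) = (if i = j then 1 else 0) + g j * x $ i"
proof -
  define g where "g j = (SOME c. (M - 1\<^sub>m n) *\<^sub>v unit_vec n j = c \<cdot>\<^sub>v x)" for j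
  have gj: "(M - 1\<^sub>m n) *\<^sub>v unit_vec n j = g j \<cdot>\<^sub>v x" for j
    unfolding g_def by (rule someI_ex, rule rk) simp
  have "M $$ (i,j) = (if i = j then 1 else 0) + g j * x $ i" if ij: "i < n" "j < n" for i j
  proof -
    have u: "unit_vec n j \<in> carrier_vec n" by simp
    have "((M - 1\<^sub>m n) *\<^sub>v unit_vec n j) $ i = M $$ (i,j) - (if i = j then 1 else 0)"
      unfolding minus_one_mult[OF M u] using mat_unit_entry[OF M ij] ij by simp
    thus ?thesis using gj[of j] ij x by simp
  qed
  thus ?thesis by blast
qed

lemma conj_back:
  fixes P Q A :: "'a::comm_ring_1 mat"
  assumes P: "P \<in> carrier_mat n n" and Q: "Q \<in> carrier_mat n n" and A: "A \<in> carrier_mat n n"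
    and QP: "Q * P = 1\<^sub>m n"
  shows "Q * (P * A * Q) * P = A"
proof -
  have AQ: "A * Q \<in> carrier_mat n n" using A Q by simp
  have "Q * (P * A * Q) = Q * (P * (A * Q))" using assoc_mult_mat[OF P A Q] by simp
  also have "\<dots> = (Q * P) * (A * Q)" using assoc_mult_mat[OF Q P AQ] by simp
  also have "\<dots> = A * Q" using QP left_mult_one_mat[OF AQ] by simp
  finally have "Q * (P * A * Q) * P = A * Q * P" by simp
  also have "\<dots> = A * (Q * P)" using assoc_mult_mat[OF A Q P] by simp
  also have "\<dots> = A" using QP right_mult_one_mat[OF A] by simp
  finally show ?thesis .
qed

lemma pick_atLeast0: "b < d \<Longrightarrow> pick {0..<d} b = b"
proof -
  assume b: "b < d"
  have e: "{a. a < d \<and> a \<in> (UNIV::nat set)} = {0..<d}" by auto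
  have "b < card {a. a < d \<and> a \<in> (UNIV::nat set)}" unfolding e using b by simp
  from pick_reduce_set[OF this] show ?thesis unfolding e pick_UNIV by simp
qed

lemma F3a:
  fixes A :: "nat \<Rightarrow> 'a::field mat" and \<gamma> :: "nat \<Rightarrow> 'a vec" and \<mu> :: "nat \<Rightarrow> 'a"
  assumes A: "\<And>t. t < Suc d \<Longrightarrow> A t \<in> carrier_mat n n"
    and rk: "\<And>t v. t < Suc d \<Longrightarrow> v \<in> carrier_vec n \<Longrightarrow> \<exists>c. (A t - 1\<^sub>m n) *\<^sub>v v = c \<cdot>\<^sub>v \<gamma> t"
    and g: "\<And>t. t < Suc d \<Longrightarrow> \<gamma> t \<in> carrier_vec n"
    and g0: "\<And>t. t < Suc d \<Longrightarrow> \<gamma> t \<noteq> 0\<^sub>v n"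
    and eig: "\<And>t. t < Suc d \<Longrightarrow> A t *\<^sub>v \<gamma> t = \<mu> t \<cdot>\<^sub>v \<gamma> t"
    and mu: "\<And>t. t < Suc d \<Longrightarrow> \<mu> t \<noteq> 1"
    and dep: "\<not> lin_indep_family n (Suc d) \<gamma>"
    and dn: "d \<le> n"
  shows "\<exists>\<omega>. (\<exists>I\<in>dsubsets n d. \<omega> I \<noteq> 0) \<and>
     (\<forall>t<Suc d. \<exists>\<theta>. \<forall>I\<in>dsubsets n d. \<omega> I = mvD (dsubsets n d) (Mc (A t)) \<theta> I)"
proof -
  define D where "D = dsubsets n d"
  have finD: "finite D" unfolding D_def by (rule dsubsets_finite)
  define G where "G = colmat n (Suc d) \<gamma>"
  have G: "G \<in> carrier_mat n (Suc d)" unfolding G_def by (rule colmat_carrier)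
  obtain c where c: "c \<in> carrier_vec (Suc d)" "G *\<^sub>v c = 0\<^sub>v n" "c \<noteq> 0\<^sub>v (Suc d)"
    using dep lif_iff[of "Suc d" \<gamma> n] g unfolding G_def by blast
  obtain P Q where PQ: "P \<in> carrier_mat n n" "Q \<in> carrier_mat n n" "P * Q = 1\<^sub>m n" "Q * P = 1\<^sub>m n"
    and zero: "\<forall>t<Suc d. \<forall>i. d \<le> i \<longrightarrow> i < n \<longrightarrow> (P *\<^sub>v col G t) $ i = 0"
    using gj_dep[OF G c(1) c(3) c(2)] by blast
  define I0 where "I0 = {0..<d}"
  have I0: "I0 \<in> D" unfolding I0_def D_def dsubsets_def using dn by auto
  define \<omega>' :: "nat set \<Rightarrow> 'a" where "\<omega>' I = (if I = I0 then 1 else 0)" for I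
  define \<omega> where "\<omega> = mvD D (compound Q) \<omega>'"
  have img: "\<exists>\<theta>. \<forall>I\<in>D. \<omega> I = mvD D (Mc (A t)) \<theta> I" if t: "t < Suc d" for t
  proof -
    have At: "A t \<in> carrier_mat n n" by (rule A[OF t])
    define x where "x = P *\<^sub>v \<gamma> t"
    have x: "x \<in> carrier_vec n" unfolding x_def using PQ g[OF t] by simp
    have xz: "x $ i = 0" if "d \<le> i" "i < n" for i
      using zero t that colmat_col[of t "Suc d" \<gamma> n] g[OF t] unfolding x_def G_def by auto
    have x0: "x \<noteq> 0\<^sub>v n"
    proof
      assume "x = 0\<^sub>v n"
      hence "Q *\<^sub>v x = 0\<^sub>v n" using PQ(2) by (auto intro!: eq_vecI simp: scalar_prod_def)
      moreover have "Q *\<^sub>v x = \<gamma> t" unfolding x_def using PQ g[OF t] by (simp add: assoc_mult_mat_vec[symmetric])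
      ultimately show False using g0[OF t] by simp
    qed
    define A' where "A' = P * A t * Q"
    have A': "A' \<in> carrier_mat n n" unfolding A'_def using PQ At by simp
    have rk': "\<exists>c. (A' - 1\<^sub>m n) *\<^sub>v v = c \<cdot>\<^sub>v x" if v: "v \<in> carrier_vec n" for v
      using conj_rank1[OF At PQ(1) PQ(2) g[OF t] rk[OF t] PQ(3) v] unfolding A'_def x_def by simp
    have eig': "A' *\<^sub>v x = \<mu> t \<cdot>\<^sub>v x"
      using conj_eig[OF At PQ(1) PQ(2) g[OF t] eig[OF t] PQ(4)] unfolding A'_def x_def by simp
    obtain gg where gg: "\<forall>i<n. \<forall>j<n. A' $$ (i,j) = (if i = j then 1 else 0) + gg j * x $ i"
      using entry_rank1[OF A' x rk'] by blast
    have cmp: "compound A' I I0 = (if I = I0 then \<mu> t else 0)" if I: "I \<in> D" for I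
    proof (cases "I = I0")
      case False
      note ID = dsubsets_D[OF I[unfolded D_def]] and I0D = dsubsets_D[OF I0[unfolded D_def]]
      have "\<not> I \<subseteq> I0"
      proof
        assume "I \<subseteq> I0"
        hence "I = I0" using card_subset_eq[OF I0D(3)] ID I0D by auto
        with False show False ..
      qed
      then obtain i where i: "i \<in> I" "i \<notin> I0" by auto
      have i': "d \<le> i" "i < n" using i ID unfolding I0_def by auto
      define a where "a = card {y\<in>I. y < i}"
      have "card {y\<in>I. y < i} < card I"
        by (rule psubset_card_mono[OF ID(3)]) (use i in auto)
      hence a: "a < d" unfolding a_def using ID by simp
      have pa: "pick I a = i" unfolding a_def by (rule pick_card_in_set[OF i(1)])
      have S: "submatrix A' I I0 \<in> carrier_mat d d" using A' ID I0D by (auto simp: dim_submatrix)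
      have "det (submatrix A' I I0) = 0"
      proof (rule det_zero_row_mat[OF S a])
        fix b assume b: "b < d"
        have "submatrix A' I I0 $$ (a, b) = A' $$ (pick I a, pick I0 b)"
          using A' ID I0D a b by (subst submatrix_index) auto
        also have "\<dots> = A' $$ (i, b)" unfolding pa I0_def pick_atLeast0[OF b] ..
        also have "\<dots> = 0" using gg i' b dn xz[OF i'] by auto
        finally show "submatrix A' I I0 $$ (a, b) = 0" .
      qed
      thus ?thesis unfolding compound_def using False by simp
    next
      case True
      note I0D = dsubsets_D[OF I0[unfolded D_def]]
      define N where "N = submatrix A' I0 I0"
      have N: "N \<in> carrier_mat d d" unfolding N_def using A' I0D by (auto simp: dim_submatrix)
      have Ni: "N $$ (a,b) = A' $$ (a,b)" if "a < d" "b < d" for a b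
        unfolding N_def using A' I0D that by (subst submatrix_index) (auto simp: I0_def pick_atLeast0)
      define x' where "x' = vec d (\<lambda>a. x $ a)"
      have x': "x' \<in> carrier_vec d" unfolding x'_def by simp
      have x'0: "x' \<noteq> 0\<^sub>v d"
      proof
        assume "x' = 0\<^sub>v d"
        hence "\<And>a. a < d \<Longrightarrow> x $ a = 0" unfolding x'_def by (metis index_vec index_zero_vec(1))
        hence "x = 0\<^sub>v n" using xz x by (auto intro!: eq_vecI) (meson not_le)
        with x0 show False ..
      qed
      have rkN: "\<exists>c. (N - 1\<^sub>m d) *\<^sub>v v = c \<cdot>\<^sub>v x'" if v: "v \<in> carrier_vec d" for v
      proof -
        have "(N - 1\<^sub>m d) *\<^sub>v v = (\<Sum>b<d. gg b * v $ b) \<cdot>\<^sub>v x'"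
        proof (rule eq_vecI)
          fix a assume "a < dim_vec ((\<Sum>b<d. gg b * v $ b) \<cdot>\<^sub>v x')"
          hence a: "a < d" unfolding x'_def by simp
          have "((N - 1\<^sub>m d) *\<^sub>v v) $ a = (N *\<^sub>v v) $ a - v $ a"
            unfolding minus_one_mult[OF N v] using a v N by simp
          also have "(N *\<^sub>v v) $ a = (\<Sum>b<d. N $$ (a,b) * v $ b)"
            using N v a by (simp add: scalar_prod_def atLeast0LessThan)
          also have "\<dots> = (\<Sum>b<d. (if a = b then v $ b else 0) + x $ a * (gg b * v $ b))"
            by (rule sum.cong[OF refl]) (use Ni a gg dn in \<open>auto simp: algebra_simps\<close>)
          also have "\<dots> = v $ a + x $ a * (\<Sum>b<d. gg b * v $ b)"
            using a by (simp add: sum.distrib sum_distrib_left)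
          finally show "((N - 1\<^sub>m d) *\<^sub>v v) $ a = ((\<Sum>b<d. gg b * v $ b) \<cdot>\<^sub>v x') $ a"
            unfolding x'_def using a by simp
        qed (use N v x' in simp)
        thus ?thesis by blast
      qed
      have eigN: "N *\<^sub>v x' = \<mu> t \<cdot>\<^sub>v x'"
      proof (rule eq_vecI)
        fix a assume "a < dim_vec (\<mu> t \<cdot>\<^sub>v x')"
        hence a: "a < d" unfolding x'_def by simp
        have "(N *\<^sub>v x') $ a = (\<Sum>b\<in>{0..<d}. A' $$ (a,b) * x $ b)"
          using N a Ni by (simp add: scalar_prod_def x'_def)
        also have "\<dots> = (\<Sum>b\<in>{0..<n}. A' $$ (a,b) * x $ b)"
          by (rule sum.mono_neutral_left) (use dn xz in auto)
        also have "\<dots> = (A' *\<^sub>v x) $ a" using A' x a dn by (simp add: scalar_prod_def)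
        also have "\<dots> = \<mu> t * x $ a" unfolding eig' using a dn x by simp
        finally show "(N *\<^sub>v x') $ a = (\<mu> t \<cdot>\<^sub>v x') $ a" unfolding x'_def using a by simp
      qed (use N x' in simp)
      have "det N = \<mu> t" by (rule mdl[OF N x' x'0 rkN eigN])
      thus ?thesis unfolding compound_def N_def using True by simp
    qed
    define \<theta>' :: "nat set \<Rightarrow> 'a" where "\<theta>' J = (if J = I0 then 1 / (\<mu> t - 1) else 0)" for J
    have w': "\<omega>' I = mvD D (Mc A') \<theta>' I" if I: "I \<in> D" for I
    proof -
      have "mvD D (Mc A') \<theta>' I = (\<Sum>J\<in>D. if J = I0 then Mc A' I J * (1 / (\<mu> t - 1)) else 0)"
        unfolding mvD_def \<theta>'_def by (rule sum.cong[OF refl]) auto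
      also have "\<dots> = Mc A' I I0 * (1 / (\<mu> t - 1))" using finD I0 by simp
      also have "\<dots> = \<omega>' I"
        unfolding Mc_def cmp[OF I] idD_def \<omega>'_def using mu[OF t] by auto
      finally show ?thesis by simp
    qed
    have int: "mmD D (compound Q) (Mc A') I1 J1 = mmD D (Mc (A t)) (compound Q) I1 J1"
      if "I1 \<in> D" "J1 \<in> D" for I1 J1
    proof (rule Mc_intertwine[OF finD _ that])
      fix I2 J2 assume "I2 \<in> D" "J2 \<in> D"
      thus "mmD D (compound Q) (compound A') I2 J2 = mmD D (compound (A t)) (compound Q) I2 J2"
        using compound_conj[OF PQ(2) PQ(1) A' PQ(3)] conj_back[OF PQ(1) PQ(2) At PQ(4)]
        unfolding D_def A'_def by simp
    qed
    have "\<forall>I\<in>D. \<omega> I = mvD D (Mc (A t)) (mvD D (compound Q) \<theta>') I"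
      unfolding \<omega>_def using transport[OF int w'] by blast
    thus ?thesis by blast
  qed
  have nz: "\<omega> I0 \<noteq> 0 \<or> (\<exists>I\<in>D. \<omega> I \<noteq> 0)"
  proof (rule ccontr)
    assume "\<not> ?thesis"
    hence z: "\<And>I. I \<in> D \<Longrightarrow> \<omega> I = 0" by auto
    have "mvD D (compound P) \<omega> I0 = mvD D (mmD D (compound P) (compound Q)) \<omega>' I0"
      unfolding \<omega>_def by (rule mvD_mvD)
    also have "\<dots> = mvD D idD \<omega>' I0"
      by (rule mvD_cong) (use compound_inv[OF PQ(1) PQ(2) PQ(3)] I0 in \<open>auto simp: D_def\<close>)
    also have "\<dots> = \<omega>' I0" by (rule mvD_id[OF finD I0])
    also have "\<dots> = 1" unfolding \<omega>'_def by simp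
    finally have "mvD D (compound P) \<omega> I0 = 1" .
    moreover have "mvD D (compound P) \<omega> I0 = 0" unfolding mvD_def using z by simp
    ultimately show False by simp
  qed
  hence "\<exists>I\<in>D. \<omega> I \<noteq> 0" using I0 by blast
  thus ?thesis using img unfolding D_def by blast
qed

lemma F3b:
  fixes A :: "nat \<Rightarrow> 'a::field mat" and \<gamma> :: "nat \<Rightarrow> 'a vec" and \<omega> :: "nat set \<Rightarrow> 'a"
  assumes A: "\<And>t. t < Suc d \<Longrightarrow> A t \<in> carrier_mat n n"
    and rk: "\<And>t v. t < Suc d \<Longrightarrow> v \<in> carrier_vec n \<Longrightarrow> \<exists>c. (A t - 1\<^sub>m n) *\<^sub>v v = c \<cdot>\<^sub>v \<gamma> t"
    and g: "\<And>t. t < Suc d \<Longrightarrow> \<gamma> t \<in> carrier_vec n"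
    and ind: "lin_indep_family n (Suc d) \<gamma>"
    and w: "\<And>t. t < Suc d \<Longrightarrow> \<exists>\<theta>. \<forall>I\<in>dsubsets n d. \<omega> I = mvD (dsubsets n d) (Mc (A t)) \<theta> I"
    and I: "I \<in> dsubsets n d"
  shows "\<omega> I = 0"
proof -
  define D where "D = dsubsets n d"
  have finD: "finite D" unfolding D_def by (rule dsubsets_finite)
  define G where "G = colmat n (Suc d) \<gamma>"
  have G: "G \<in> carrier_mat n (Suc d)" unfolding G_def by (rule colmat_carrier)
  have ker: "\<And>c. c \<in> carrier_vec (Suc d) \<Longrightarrow> G *\<^sub>v c = 0\<^sub>v n \<Longrightarrow> c = 0\<^sub>v (Suc d)"
    using ind lif_iff[of "Suc d" \<gamma> n] g unfolding G_def by blast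
  obtain P Q p where PQ: "P \<in> carrier_mat n n" "Q \<in> carrier_mat n n" "P * Q = 1\<^sub>m n" "Q * P = 1\<^sub>m n"
    and inj: "inj_on p {0..<Suc d}"
    and pp: "\<forall>t<Suc d. p t < n \<and> p t \<le> t \<and> P *\<^sub>v col G t = unit_vec n (p t)"
    using gj_indep[OF G ker] by blast
  define \<omega>' where "\<omega>' = mvD D (compound P) \<omega>"
  have z: "\<omega>' J = 0" if J: "J \<in> D" and t: "t < Suc d" and pt: "p t \<notin> J" for J t
  proof -
    have At: "A t \<in> carrier_mat n n" by (rule A[OF t])
    define A' where "A' = P * A t * Q"
    have A': "A' \<in> carrier_mat n n" unfolding A'_def using PQ At by simp
    have Pg: "P *\<^sub>v \<gamma> t = unit_vec n (p t)" using pp t colmat_col[of t "Suc d" \<gamma> n] g[OF t] unfolding G_def by auto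
    have rk': "\<exists>c. (A' - 1\<^sub>m n) *\<^sub>v v = c \<cdot>\<^sub>v unit_vec n (p t)" if v: "v \<in> carrier_vec n" for v
      using conj_rank1[OF At PQ(1) PQ(2) g[OF t] rk[OF t] PQ(3) v] Pg unfolding A'_def by simp
    have ptn: "p t < n" using pp t by simp
    have Mz: "Mc A' J K = 0" if K: "K \<in> D" for K
    proof -
      have "compound A' J K = (if J = K then 1 else 0)"
      proof (rule compound_idrows[OF A' J[unfolded D_def] K[unfolded D_def]])
        fix i j assume i: "i \<in> J" and j: "j < n"
        have "i < n" using dsubsets_D(1)[OF J[unfolded D_def]] i by auto
        moreover have "i \<noteq> p t" using i pt by auto
        ultimately show "A' $$ (i, j) = (if i = j then 1 else 0)"
          using rows_id_from_rank[OF A' ptn, of i j] rk' j by blast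
      qed
      thus ?thesis unfolding Mc_def idD_def by simp
    qed
    obtain \<theta> where th: "\<forall>I\<in>D. \<omega> I = mvD D (Mc (A t)) \<theta> I" using w[OF t] unfolding D_def by blast
    have int: "mmD D (compound P) (Mc (A t)) I1 J1 = mmD D (Mc A') (compound P) I1 J1"
      if "I1 \<in> D" "J1 \<in> D" for I1 J1
      by (rule Mc_intertwine[OF finD _ that]) (unfold D_def A'_def, rule compound_conj[OF PQ(1) PQ(2) At PQ(4)], auto)
    have "\<omega>' J = mvD D (Mc A') (mvD D (compound P) \<theta>) J"
      unfolding \<omega>'_def by (rule transport[OF int]) (use th J in auto)
    also have "\<dots> = 0" unfolding mvD_def using Mz by simp
    finally show ?thesis .
  qed
  have z': "\<omega>' J = 0" if J: "J \<in> D" for J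
  proof -
    have "\<exists>t<Suc d. p t \<notin> J"
    proof (rule ccontr)
      assume "\<not> ?thesis"
      hence "p ` {0..<Suc d} \<subseteq> J" by auto
      hence "card (p ` {0..<Suc d}) \<le> card J" using dsubsets_D(3)[OF J[unfolded D_def]] by (rule card_mono[rotated])
      thus False using card_image[OF inj] dsubsets_D(2)[OF J[unfolded D_def]] by simp
    qed
    thus ?thesis using z[OF J] by blast
  qed
  have ID: "I \<in> D" using I unfolding D_def .
  have "\<omega> I = mvD D idD \<omega> I" by (rule mvD_id[OF finD ID, symmetric])
  also have "\<dots> = mvD D (mmD D (compound Q) (compound P)) \<omega> I"
    by (rule mvD_cong) (use compound_inv[OF PQ(2) PQ(1) PQ(4)] ID in \<open>auto simp: D_def\<close>)
  also have "\<dots> = mvD D (compound Q) \<omega>' I" unfolding \<omega>'_def by (rule mvD_mvD[symmetric])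
  also have "\<dots> = 0" unfolding mvD_def using z' by simp
  finally show ?thesis .
qed

lemma rank_of_refl:
  fixes A :: "'a::field mat"
  assumes A: "A \<in> carrier_mat n n" and r: "is_reflection n A" and rv: "is_reflection_vector n A \<gamma>"
    and v: "v \<in> carrier_vec n"
  shows "\<exists>c. (A - 1\<^sub>m n) *\<^sub>v v = c \<cdot>\<^sub>v \<gamma>"
proof -
  obtain u where u: "u \<in> carrier_vec n" "u \<noteq> 0\<^sub>v n" "refl_image n A = {c \<cdot>\<^sub>v u | c. True}"
    using r unfolding is_reflection_def by blast
  have gi: "\<gamma> \<in> refl_image n A" and g0: "\<gamma> \<noteq> 0\<^sub>v n" using rv unfolding is_reflection_vector_def by auto
  obtain c0 where c0: "\<gamma> = c0 \<cdot>\<^sub>v u" using gi u(3) by blast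
  have c00: "c0 \<noteq> 0" using c0 g0 u(1) by auto
  have "(A - 1\<^sub>m n) *\<^sub>v v \<in> refl_image n A" unfolding refl_image_def using v by blast
  then obtain c where c: "(A - 1\<^sub>m n) *\<^sub>v v = c \<cdot>\<^sub>v u" using u(3) by blast
  have "c \<cdot>\<^sub>v u = (c / c0) \<cdot>\<^sub>v \<gamma>" unfolding c0 smult_smult_assoc using c00 by simp
  hence "(A - 1\<^sub>m n) *\<^sub>v v = (c / c0) \<cdot>\<^sub>v \<gamma>" using c by simp
  thus ?thesis by (rule exI)
qed

lemma refl_vec_carrier:
  fixes A :: "'a::field mat"
  assumes A: "A \<in> carrier_mat n n" and rv: "is_reflection_vector n A \<gamma>"
  shows "\<gamma> \<in> carrier_vec n"
proof -
  obtain v where "v \<in> carrier_vec n" "\<gamma> = (A - 1\<^sub>m n) *\<^sub>v v"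
    using rv unfolding is_reflection_vector_def refl_image_def by blast
  moreover have "A - 1\<^sub>m n \<in> carrier_mat n n" using A by (intro minus_carrier_mat) auto
  ultimately show ?thesis by simp
qed

lemma inv_intertwine:
  assumes fin: "finite D"
    and PQ: "\<And>I J. I \<in> D \<Longrightarrow> J \<in> D \<Longrightarrow> mmD D P Q I J = idD I J"
    and QP: "\<And>I J. I \<in> D \<Longrightarrow> J \<in> D \<Longrightarrow> mmD D Q P I J = idD I J"
    and int: "\<And>I J. I \<in> D \<Longrightarrow> J \<in> D \<Longrightarrow> mmD D P F I J = mmD D G P I J"
    and I: "I \<in> D" and J: "J \<in> D"
  shows "mmD D Q G I J = mmD D F Q I J"
proof -
  have "mmD D Q G I J = mmD D (mmD D Q G) idD I J" by (rule mmD_id_right[OF fin J, symmetric])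
  also have "\<dots> = mmD D (mmD D Q G) (mmD D P Q) I J" by (rule mmD_cong) (use PQ J in auto)
  also have "\<dots> = mmD D (mmD D (mmD D Q G) P) Q I J" by (rule mmD_assoc[symmetric])
  also have "\<dots> = mmD D (mmD D Q (mmD D G P)) Q I J" by (rule mmD_cong) (auto simp: mmD_assoc)
  also have "\<dots> = mmD D (mmD D Q (mmD D P F)) Q I J"
    by (rule mmD_cong, rule mmD_cong) (use int in auto)
  also have "\<dots> = mmD D (mmD D (mmD D Q P) F) Q I J" by (rule mmD_cong) (auto simp: mmD_assoc)
  also have "\<dots> = mmD D (mmD D idD F) Q I J"
    by (rule mmD_cong, rule mmD_cong) (use QP I in auto)
  also have "\<dots> = mmD D F Q I J" by (rule mmD_cong) (use mmD_id_left[OF fin I] in auto)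
  finally show ?thesis .
qed

theorem lemma5p4:
  fixes W :: "('g, 'b) monoid_scheme"
    and k n d :: nat
    and s :: "nat \<Rightarrow> 'g"
    and \<rho>1 \<rho>2 :: "'g \<Rightarrow> 'a::field_char_0 mat"
    and \<alpha> \<beta> :: "nat \<Rightarrow> 'a vec"
    and lam mu :: "nat \<Rightarrow> 'a"
    and P :: "nat set \<Rightarrow> nat set \<Rightarrow> 'a"
    and j :: "nat \<Rightarrow> nat"
  assumes W_group: "group W"
    and S_in: "s ` {..<k} \<subseteq> carrier W"
    and S_gen: "carrier W = generate W (s ` {..<k})"
    and rep1: "reflection_rep W k s n \<rho>1" and irr1: "irreducible_rep W n \<rho>1"
    and rep2: "reflection_rep W k s n \<rho>2" and irr2: "irreducible_rep W n \<rho>2"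
    and alpha: "\<forall>i < k. is_reflection_vector n (\<rho>1 (s i)) (\<alpha> i) \<and>
                          \<rho>1 (s i) *\<^sub>v \<alpha> i = lam i \<cdot>\<^sub>v \<alpha> i"
    and beta: "\<forall>i < k. is_reflection_vector n (\<rho>2 (s i)) (\<beta> i) \<and>
                          \<rho>2 (s i) *\<^sub>v \<beta> i = mu i \<cdot>\<^sub>v \<beta> i"
    and d_ge: "1 \<le> d" and d_le: "d \<le> n - 1"
    and psi: "ext_pow_iso W n d \<rho>1 \<rho>2 P"
    and j_range: "\<forall>t < d + 1. j t < k"
    and indep1: "lin_indep_family n (d + 1) (\<lambda>t. \<alpha> (j t))"
  shows "lin_indep_family n (d + 1) (\<lambda>t. \<beta> (j t))"
proof (rule ccontr)
  assume dep: "\<not> lin_indep_family n (d + 1) (\<lambda>t. \<beta> (j t))"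
  define D where "D = dsubsets n d"
  have finD: "finite D" unfolding D_def by (rule dsubsets_finite)
  have dn: "d \<le> n" using d_le by simp
  have jt: "\<And>t. t < Suc d \<Longrightarrow> j t < k" using j_range by simp
  have sW: "\<And>t. t < Suc d \<Longrightarrow> s (j t) \<in> carrier W" using S_in jt by auto
  have A1: "\<And>t. t < Suc d \<Longrightarrow> \<rho>1 (s (j t)) \<in> carrier_mat n n"
    using rep1 sW unfolding reflection_rep_def is_rep_def by blast
  have A2: "\<And>t. t < Suc d \<Longrightarrow> \<rho>2 (s (j t)) \<in> carrier_mat n n"
    using rep2 sW unfolding reflection_rep_def is_rep_def by blast
  have R1: "\<And>t. t < Suc d \<Longrightarrow> is_reflection n (\<rho>1 (s (j t)))"
    using rep1 jt unfolding reflection_rep_def by blast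
  have R2: "\<And>t. t < Suc d \<Longrightarrow> is_reflection n (\<rho>2 (s (j t)))"
    using rep2 jt unfolding reflection_rep_def by blast
  have RV1: "\<And>t. t < Suc d \<Longrightarrow> is_reflection_vector n (\<rho>1 (s (j t))) (\<alpha> (j t))"
    using alpha jt by blast
  have RV2: "\<And>t. t < Suc d \<Longrightarrow> is_reflection_vector n (\<rho>2 (s (j t))) (\<beta> (j t))"
    using beta jt by blast
  have E2: "\<And>t. t < Suc d \<Longrightarrow> \<rho>2 (s (j t)) *\<^sub>v \<beta> (j t) = mu (j t) \<cdot>\<^sub>v \<beta> (j t)"
    using beta jt by blast
  have mu1: "mu (j t) \<noteq> 1" if t: "t < Suc d" for t
  proof (rule refl_ne1[OF A2[OF t]])
    show "diagonalizable n (\<rho>2 (s (j t)))" using R2[OF t] unfolding is_reflection_def by blast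
    show "\<And>v. v \<in> carrier_vec n \<Longrightarrow> \<exists>c. (\<rho>2 (s (j t)) - 1\<^sub>m n) *\<^sub>v v = c \<cdot>\<^sub>v \<beta> (j t)"
      by (rule rank_of_refl[OF A2[OF t] R2[OF t] RV2[OF t]])
    show "\<beta> (j t) \<in> refl_image n (\<rho>2 (s (j t)))" "\<beta> (j t) \<noteq> 0\<^sub>v n"
      using RV2[OF t] unfolding is_reflection_vector_def by auto
    show "\<rho>2 (s (j t)) *\<^sub>v \<beta> (j t) = mu (j t) \<cdot>\<^sub>v \<beta> (j t)" by (rule E2[OF t])
  qed
  obtain \<omega>2 where w2: "\<exists>I\<in>D. \<omega>2 I \<noteq> 0"
    and w2i: "\<forall>t<Suc d. \<exists>\<theta>. \<forall>I\<in>D. \<omega>2 I = mvD D (Mc (\<rho>2 (s (j t)))) \<theta> I"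
  proof -
    have "\<exists>\<omega>. (\<exists>I\<in>dsubsets n d. \<omega> I \<noteq> 0) \<and>
     (\<forall>t<Suc d. \<exists>\<theta>. \<forall>I\<in>dsubsets n d. \<omega> I = mvD (dsubsets n d) (Mc (\<rho>2 (s (j t)))) \<theta> I)"
    proof (rule F3a[where \<gamma> = "\<lambda>t. \<beta> (j t)" and \<mu> = "\<lambda>t. mu (j t)"])
      show "\<And>t. t < Suc d \<Longrightarrow> \<rho>2 (s (j t)) \<in> carrier_mat n n" by (rule A2)
      show "\<And>t v. t < Suc d \<Longrightarrow> v \<in> carrier_vec n \<Longrightarrow> \<exists>c. (\<rho>2 (s (j t)) - 1\<^sub>m n) *\<^sub>v v = c \<cdot>\<^sub>v \<beta> (j t)"
        by (rule rank_of_refl[OF A2 R2 RV2])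
      show "\<And>t. t < Suc d \<Longrightarrow> \<beta> (j t) \<in> carrier_vec n" by (rule refl_vec_carrier[OF A2 RV2])
      show "\<And>t. t < Suc d \<Longrightarrow> \<beta> (j t) \<noteq> 0\<^sub>v n" using RV2 unfolding is_reflection_vector_def by blast
      show "\<And>t. t < Suc d \<Longrightarrow> \<rho>2 (s (j t)) *\<^sub>v \<beta> (j t) = mu (j t) \<cdot>\<^sub>v \<beta> (j t)" by (rule E2)
      show "\<And>t. t < Suc d \<Longrightarrow> mu (j t) \<noteq> 1" by (rule mu1)
      show "\<not> lin_indep_family n (Suc d) (\<lambda>t. \<beta> (j t))" using dep by simp
      show "d \<le> n" by (rule dn)
    qed
    thus ?thesis using that unfolding D_def by blast
  qed
  obtain Q where Q: "\<And>I J. I \<in> D \<Longrightarrow> J \<in> D \<Longrightarrow> mmD D P Q I J = idD I J \<and> mmD D Q P I J = idD I J"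
    and Pint: "\<And>g I J. g \<in> carrier W \<Longrightarrow> I \<in> D \<Longrightarrow> J \<in> D \<Longrightarrow>
        mmD D P (compound (\<rho>1 g)) I J = mmD D (compound (\<rho>2 g)) P I J"
    using psi unfolding ext_pow_iso_def mmD_def idD_def D_def by blast
  define \<omega>1 where "\<omega>1 = mvD D Q \<omega>2"
  have w1i: "\<exists>\<theta>. \<forall>I\<in>dsubsets n d. \<omega>1 I = mvD (dsubsets n d) (Mc (\<rho>1 (s (j t)))) \<theta> I"
    if t: "t < Suc d" for t
  proof -
    obtain \<theta> where th: "\<forall>I\<in>D. \<omega>2 I = mvD D (Mc (\<rho>2 (s (j t)))) \<theta> I" using w2i t by blast
    have intM: "mmD D P (Mc (\<rho>1 (s (j t)))) I J = mmD D (Mc (\<rho>2 (s (j t)))) P I J"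
      if "I \<in> D" "J \<in> D" for I J
      by (rule Mc_intertwine[OF finD _ that]) (rule Pint[OF sW[OF t]])
    have intQ: "mmD D Q (Mc (\<rho>2 (s (j t)))) I J = mmD D (Mc (\<rho>1 (s (j t)))) Q I J"
      if "I \<in> D" "J \<in> D" for I J
      by (rule inv_intertwine[OF finD _ _ intM that]) (use Q in auto)
    have "\<forall>I\<in>D. \<omega>1 I = mvD D (Mc (\<rho>1 (s (j t)))) (mvD D Q \<theta>) I"
      unfolding \<omega>1_def using transport[OF intQ] th by blast
    thus ?thesis unfolding D_def by blast
  qed
  have z1: "\<omega>1 I = 0" if I: "I \<in> D" for I
  proof (rule F3b[where \<gamma> = "\<lambda>t. \<alpha> (j t)" and A = "\<lambda>t. \<rho>1 (s (j t))"])
    show "\<And>t. t < Suc d \<Longrightarrow> \<rho>1 (s (j t)) \<in> carrier_mat n n" by (rule A1)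
    show "\<And>t v. t < Suc d \<Longrightarrow> v \<in> carrier_vec n \<Longrightarrow> \<exists>c. (\<rho>1 (s (j t)) - 1\<^sub>m n) *\<^sub>v v = c \<cdot>\<^sub>v \<alpha> (j t)"
      by (rule rank_of_refl[OF A1 R1 RV1])
    show "\<And>t. t < Suc d \<Longrightarrow> \<alpha> (j t) \<in> carrier_vec n" by (rule refl_vec_carrier[OF A1 RV1])
    show "lin_indep_family n (Suc d) (\<lambda>t. \<alpha> (j t))" using indep1 by simp
    show "\<And>t. t < Suc d \<Longrightarrow> \<exists>\<theta>. \<forall>I\<in>dsubsets n d. \<omega>1 I = mvD (dsubsets n d) (Mc (\<rho>1 (s (j t)))) \<theta> I"
      by (rule w1i)
    show "I \<in> dsubsets n d" using I unfolding D_def .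
  qed
  obtain I where I: "I \<in> D" "\<omega>2 I \<noteq> 0" using w2 by blast
  have "\<omega>2 I = mvD D idD \<omega>2 I" by (rule mvD_id[OF finD I(1), symmetric])
  also have "\<dots> = mvD D (mmD D P Q) \<omega>2 I" by (rule mvD_cong) (use Q I(1) in auto)
  also have "\<dots> = mvD D P \<omega>1 I" unfolding \<omega>1_def by (rule mvD_mvD[symmetric])
  also have "\<dots> = 0" unfolding mvD_def using z1 by simp
  finally show False using I(2) by simp
qed

end
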